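(* Let $G$ be a connected graph with $m$ edges and $m_1$ pendent $2$-length paths. Then $rc(L^2(G))\leq m-m_1$, and equality holds if and only if $G$ is a path of length at least $3$.
   Context: All graphs are simple, finite and undirected. $L(G)$ is the line graph of $G$ and $L^2(G)=L(L(G))$ is the iterated line graph. A pendent $k$-length path of $G$ is a path of length $k$ in $G$ one of whose end vertices has degree $1$ in $G$ and all of whose internal vertices have degree $2$ in $G$. For an edge-colouring of a graph (adjacent edges may receive the same colour), a path is rainbow if no two of its edges have the same colour; the graph is rainbow connected if every two vertices are joined by a rainbow path. The rainbow connection number $rc(H)$ of a connected graph $H$ is the smallest number of colours in an edge-colouring making $H$ rainbow connected. *)

theory Defs
  imports Main
begin

type_synonym 'a graph = "'a set \<times> 'a set set"

definition simple_graph :: "'a graph \<Rightarrow> bool" where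
  "simple_graph G \<longleftrightarrow> finite (fst G) \<and>
     (\<forall>e\<in>snd G. \<exists>u v. e = {u, v} \<and> u \<noteq> v \<and> u \<in> fst G \<and> v \<in> fst G)"

definition is_gpath :: "'a graph \<Rightarrow> 'a list \<Rightarrow> bool" where
  "is_gpath G xs \<longleftrightarrow> xs \<noteq> [] \<and> set xs \<subseteq> fst G \<and> distinct xs \<and>
     (\<forall>i. Suc i < length xs \<longrightarrow> {xs ! i, xs ! Suc i} \<in> snd G)"

definition path_edges :: "'a list \<Rightarrow> 'a set list" where
  "path_edges xs = map (\<lambda>i. {xs ! i, xs ! Suc i}) [0..<length xs - 1]"

definition connected_graph :: "'a graph \<Rightarrow> bool" where
  "connected_graph G \<longleftrightarrow> fst G \<noteq> {} \<and>
     (\<forall>u\<in>fst G. \<forall>v\<in>fst G. \<exists>xs. is_gpath G xs \<and> hd xs = u \<and> last xs = v)"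

definition degree :: "'a graph \<Rightarrow> 'a \<Rightarrow> nat" where
  "degree G v = card {e \<in> snd G. v \<in> e}"

definition line_graph :: "'a graph \<Rightarrow> 'a set graph" where
  "line_graph G = (snd G, {{e, f} | e f. e \<in> snd G \<and> f \<in> snd G \<and> e \<noteq> f \<and> e \<inter> f \<noteq> {}})"

definition rainbow_path :: "('a set \<Rightarrow> nat) \<Rightarrow> 'a list \<Rightarrow> bool" where
  "rainbow_path c xs \<longleftrightarrow> distinct (map c (path_edges xs))"

definition rainbow_connected :: "'a graph \<Rightarrow> ('a set \<Rightarrow> nat) \<Rightarrow> bool" where
  "rainbow_connected G c \<longleftrightarrow>
     (\<forall>u\<in>fst G. \<forall>v\<in>fst G. \<exists>xs. is_gpath G xs \<and> hd xs = u \<and> last xs = v \<and> rainbow_path c xs)"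

definition rc :: "'a graph \<Rightarrow> nat" where
  "rc G = (LEAST k. \<exists>c. (\<forall>e\<in>snd G. c e < k) \<and> rainbow_connected G c)"

text \<open>Pendent 2-length paths, counted as subgraphs (i.e. by their edge sets).\<close>
definition pendent_2paths :: "'a graph \<Rightarrow> 'a set set set" where
  "pendent_2paths G = {set (path_edges xs) | xs. is_gpath G xs \<and> length xs = 3 \<and>
       degree G (xs ! 0) = 1 \<and> degree G (xs ! 1) = 2}"

definition is_path_graph_len_ge3 :: "'a graph \<Rightarrow> bool" where
  "is_path_graph_len_ge3 G \<longleftrightarrow> (\<exists>xs. is_gpath G xs \<and> set xs = fst G \<and>
       set (path_edges xs) = snd G \<and> length xs \<ge> 4)"

end

theory Submission
  imports Defs
begin

lemma path_edges_Nil[simp]: "path_edges [] = []"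
  by (simp add: path_edges_def)
lemma path_edges_single[simp]: "path_edges [x] = []"
  by (simp add: path_edges_def)
lemma path_edges_Cons2[simp]: "path_edges (x#y#zs) = {x,y} # path_edges (y#zs)"
  unfolding path_edges_def by (simp add: upt_conv_Cons map_Suc_upt[symmetric] del: upt_Suc)
lemma length_path_edges[simp]: "length (path_edges xs) = length xs - 1"
  by (simp add: path_edges_def)
lemma nth_path_edges: "i < length xs - 1 \<Longrightarrow> path_edges xs ! i = {xs!i, xs!Suc i}"
  by (simp add: path_edges_def)

lemma is_gpath_iff: "is_gpath G xs \<longleftrightarrow> xs \<noteq> [] \<and> set xs \<subseteq> fst G \<and> distinct xs \<and>
    successively (\<lambda>u v. {u,v} \<in> snd G) xs"
  by (simp add: is_gpath_def successively_conv_nth)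

lemma rc_le: "(\<forall>e\<in>snd H. c e < k) \<Longrightarrow> rainbow_connected H c \<Longrightarrow> rc H \<le> k"
  unfolding rc_def by (rule Least_le) blast

lemma rc_witness: assumes "\<exists>c. (\<forall>e\<in>snd H. c e < k) \<and> rainbow_connected H c"
  shows "\<exists>c. (\<forall>e\<in>snd H. c e < rc H) \<and> rainbow_connected H c"
proof -
  let ?P = "\<lambda>k. \<exists>c. (\<forall>e\<in>snd H. c e < k) \<and> rainbow_connected H c"
  have "\<exists>k. ?P k" using assms by blast
  from LeastI_ex[OF this] show ?thesis unfolding rc_def .
qed

lemma pe_meet: "successively (\<lambda>e f. e \<inter> f \<noteq> {}) (path_edges vs)"
proof (induction vs rule: induct_list012)
  case (3 x y zs)
  then show ?case by (cases zs) auto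
qed auto

lemma pe_hd_last: "length vs \<ge> 2 \<Longrightarrow> hd vs \<in> hd (path_edges vs) \<and> last vs \<in> last (path_edges vs)"
proof -
  assume a: "length vs \<ge> 2"
  have ne: "path_edges vs \<noteq> []" using a by (metis One_nat_def Suc_1 diff_is_0_eq length_path_edges list.size(3) not_less_eq_eq)
  have "hd (path_edges vs) = path_edges vs ! 0" using ne by (simp add: hd_conv_nth)
  also have "\<dots> = {vs!0, vs!1}" using a by (simp add: nth_path_edges)
  finally have 1: "hd vs \<in> hd (path_edges vs)" using a by (cases vs) auto
  have "last (path_edges vs) = path_edges vs ! (length vs - 2)" using ne by (simp add: last_conv_nth numeral_2_eq_2)
  also have "\<dots> = {vs!(length vs - 2), vs!Suc (length vs - 2)}" using a by (simp add: nth_path_edges)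
  moreover have "Suc (length vs - 2) = length vs - 1" using a by arith
  moreover have "last vs = vs ! (length vs - 1)" using a by (intro last_conv_nth) auto
  ultimately have "last vs \<in> last (path_edges vs)" by simp
  with 1 show ?thesis by simp
qed

lemma pe_subset: "successively (\<lambda>u v. {u,v} \<in> E) vs \<Longrightarrow> set (path_edges vs) \<subseteq> E"
  by (induction vs rule: induct_list012) auto

definition walk :: "'b set set \<Rightarrow> 'b set set \<Rightarrow> 'b set set \<Rightarrow> 'b set list \<Rightarrow> bool" where
  "walk W X Y ws \<longleftrightarrow> ws \<noteq> [] \<and> set ws \<subseteq> W \<and> successively (\<lambda>e f. e \<inter> f \<noteq> {}) ws \<and> hd ws \<in> X \<and> last ws \<in> Y"

lemma succ_take: "successively P xs \<Longrightarrow> successively P (take n xs)"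
  by (metis append_take_drop_id successively_append_iff)
lemma succ_drop: "successively P xs \<Longrightarrow> successively P (drop n xs)"
  by (metis append_take_drop_id successively_append_iff)

lemma last_take_Suc: "i < length xs \<Longrightarrow> last (take (Suc i) xs) = xs ! i"
  by (simp add: take_Suc_conv_app_nth)

lemma walk_shortcut1:
  assumes w: "walk W X Y gs" and ij: "i < j" "j < length gs" and eq: "gs!i = gs!j"
  shows "walk W X Y (take (Suc i) gs @ drop (Suc j) gs) \<and> length (take (Suc i) gs @ drop (Suc j) gs) < length gs"
proof -
  let ?l = "take (Suc i) gs @ drop (Suc j) gs"
  have s: "successively (\<lambda>e f. e \<inter> f \<noteq> {}) gs" and ne: "gs \<noteq> []" using w by (auto simp: walk_def)
  have "successively (\<lambda>e f. e \<inter> f \<noteq> {}) ?l"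
  proof (cases "Suc j < length gs")
    case True
    have "gs ! j \<inter> gs ! Suc j \<noteq> {}" using successively_nth[OF s True] .
    then show ?thesis using ij True eq
      by (auto simp: successively_append_iff succ_take[OF s] succ_drop[OF s] last_take_Suc hd_drop_conv_nth)
  next
    case False
    then show ?thesis using succ_take[OF s] by simp
  qed
  moreover have "set ?l \<subseteq> W" using w by (auto simp: walk_def dest: in_set_takeD in_set_dropD)
  moreover have "hd ?l \<in> X" using w ij by (auto simp: walk_def)
  moreover have "last ?l \<in> Y"
  proof (cases "Suc j < length gs")
    case True then show ?thesis using w by (auto simp: walk_def)
  next
    case False
    then have "j = length gs - 1" using ij by auto
    then have "last gs = gs ! i" using eq ne by (simp add: last_conv_nth)
    then show ?thesis using w False ij by (auto simp: walk_def last_take_Suc)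
  qed
  ultimately show ?thesis using ij by (auto simp: walk_def)
qed

lemma walk_shortcut2:
  assumes w: "walk W X Y gs" and ij: "Suc i < j" "j < length gs" and m: "gs!i \<inter> gs!j \<noteq> {}"
  shows "walk W X Y (take (Suc i) gs @ drop j gs) \<and> length (take (Suc i) gs @ drop j gs) < length gs"
proof -
  let ?l = "take (Suc i) gs @ drop j gs"
  have s: "successively (\<lambda>e f. e \<inter> f \<noteq> {}) gs" and ne: "gs \<noteq> []" using w by (auto simp: walk_def)
  have "successively (\<lambda>e f. e \<inter> f \<noteq> {}) ?l"
    using ij m by (auto simp: successively_append_iff succ_take[OF s] succ_drop[OF s] last_take_Suc hd_drop_conv_nth)
  moreover have "set ?l \<subseteq> W" using w by (auto simp: walk_def dest: in_set_takeD in_set_dropD)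
  moreover have "hd ?l \<in> X" using w ij by (auto simp: walk_def)
  moreover have "last ?l \<in> Y" using w ij by (auto simp: walk_def)
  ultimately show ?thesis using ij by (auto simp: walk_def)
qed

lemma walk_drop:
  assumes w: "walk W X Y gs" and i: "0 < i" "i < length gs" "gs!i \<in> X"
  shows "walk W X Y (drop i gs) \<and> length (drop i gs) < length gs"
  using w i by (auto simp: walk_def succ_drop hd_drop_conv_nth dest: in_set_dropD)

lemma walk_take:
  assumes w: "walk W X Y gs" and i: "Suc i < length gs" "gs!i \<in> Y"
  shows "walk W X Y (take (Suc i) gs) \<and> length (take (Suc i) gs) < length gs"
  using w i by (auto simp: walk_def succ_take last_take_Suc dest: in_set_takeD)

definition minwalk where
  "minwalk W X Y gs \<longleftrightarrow> walk W X Y gs \<and> (\<forall>ws. walk W X Y ws \<longrightarrow> length gs \<le> length ws)"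

lemma minwalk_exists:
  assumes "walk W X Y ws" shows "\<exists>gs. minwalk W X Y gs"
  using ex_has_least_nat[of "walk W X Y" ws length] assms unfolding minwalk_def by blast

lemma minwalk_props:
  assumes "minwalk W X Y gs"
  shows "distinct gs" "\<And>i. 0 < i \<Longrightarrow> i < length gs \<Longrightarrow> gs!i \<notin> X"
    "\<And>i. Suc i < length gs \<Longrightarrow> gs!i \<notin> Y"
    "\<And>i j. Suc i < j \<Longrightarrow> j < length gs \<Longrightarrow> gs!i \<inter> gs!j = {}"
proof -
  have w: "walk W X Y gs" and mn: "\<And>ws. walk W X Y ws \<Longrightarrow> length gs \<le> length ws"
    using assms by (auto simp: minwalk_def)
  show "distinct gs"
  proof (rule ccontr)
    assume "\<not> distinct gs"
    then obtain i j where ij: "i < j" "j < length gs" "gs!i = gs!j"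
      by (metis distinct_conv_nth linorder_neqE_nat)
    from walk_shortcut1[OF w ij] mn show False by (meson leD)
  qed
  show "gs!i \<notin> X" if "0 < i" "i < length gs" for i
  proof
    assume "gs!i \<in> X"
    from walk_drop[OF w that this] mn show False by (meson leD)
  qed
  show "gs!i \<notin> Y" if "Suc i < length gs" for i
  proof
    assume "gs!i \<in> Y"
    from walk_take[OF w that this] mn show False by (meson leD)
  qed
  show "gs!i \<inter> gs!j = {}" if "Suc i < j" "j < length gs" for i j
  proof (rule ccontr)
    assume "gs!i \<inter> gs!j \<noteq> {}"
    from walk_shortcut2[OF w that this] mn show False by (meson leD)
  qed
qed

locale sg =
  fixes V :: "'a set" and E :: "'a set set"
  assumes sg: "simple_graph (V, E)"
begin

lemma edgeE: assumes "e \<in> E" obtains u v where "e = {u,v}" "u \<noteq> v" "u \<in> V" "v \<in> V"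
  using sg assms unfolding simple_graph_def by auto

lemma finV: "finite V" using sg by (simp add: simple_graph_def)
lemma E_Pow: "E \<subseteq> Pow V" by (auto elim!: edgeE)
lemma finE: "finite E" using finite_subset[OF E_Pow] finV by auto
lemma edge_ne: "e \<in> E \<Longrightarrow> e \<noteq> {}" by (auto elim: edgeE)

definition adj where "adj e f \<longleftrightarrow> e \<in> E \<and> f \<in> E \<and> e \<noteq> f \<and> e \<inter> f \<noteq> {}"
lemma adj_sym: "adj e f \<Longrightarrow> adj f e" by (auto simp: adj_def)
definition A1 where "A1 = {{e,f}|e f. adj e f}"
definition E2 where "E2 = {{\<alpha>,\<beta>}|\<alpha> \<beta>. \<alpha>\<in>A1 \<and> \<beta>\<in>A1 \<and> \<alpha>\<noteq>\<beta> \<and> \<alpha>\<inter>\<beta>\<noteq>{}}"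
definition N where "N = {f\<in>E. \<exists>a b. a \<noteq> b \<and> adj a f \<and> adj b f}"

lemma LL: "line_graph (line_graph (V,E)) = (A1, E2)"
  by (simp add: line_graph_def A1_def E2_def adj_def)

lemma N_sub: "N \<subseteq> E" by (auto simp: N_def)
lemma finN: "finite N" using finite_subset[OF N_sub finE] .

lemma A1_sub: "\<alpha> \<in> A1 \<Longrightarrow> \<alpha> \<subseteq> E" by (auto simp: A1_def adj_def)

lemma A1_other: assumes "\<alpha> \<in> A1" "f \<in> \<alpha>" shows "\<exists>a. \<alpha> = {a,f} \<and> adj a f"
proof -
  from assms(1) obtain a1 a2 where "\<alpha> = {a1,a2}" "adj a1 a2" by (auto simp: A1_def)
  with assms(2) show ?thesis
    by (metis adj_sym insertE insert_commute singletonD)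
qed

lemma E2_cases:
  assumes "\<epsilon> \<in> E2"
  obtains a f b where "\<epsilon> = {{a,f},{f,b}}" "adj a f" "adj f b" "a \<noteq> b"
proof -
  from assms obtain \<alpha> \<beta> where \<epsilon>: "\<epsilon> = {\<alpha>,\<beta>}" "\<alpha> \<in> A1" "\<beta> \<in> A1" "\<alpha> \<noteq> \<beta>" "\<alpha> \<inter> \<beta> \<noteq> {}"
    by (auto simp: E2_def)
  from \<epsilon>(5) obtain f where f: "f \<in> \<alpha>" "f \<in> \<beta>" by auto
  from A1_other[OF \<epsilon>(2) f(1)] obtain a where a: "\<alpha> = {a,f}" "adj a f" by blast
  from A1_other[OF \<epsilon>(3) f(2)] obtain b where b: "\<beta> = {b,f}" "adj b f" by blast
  have "a \<noteq> b" using a b \<epsilon>(4) by auto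
  moreover have "\<epsilon> = {{a,f},{f,b}}" using \<epsilon>(1) a(1) b(1) by (simp add: insert_commute)
  ultimately show ?thesis using that[of a f b] a(2) adj_sym[OF b(2)] by blast
qed

lemma inter_union: "adj a f \<Longrightarrow> adj f b \<Longrightarrow> a \<noteq> b \<Longrightarrow>
   \<Inter>{{a,f},{f,b}} = {f} \<and> \<Union>{{a,f},{f,b}} = {a,f,b}"
  by (auto simp: adj_def)

lemma N_mem: assumes "adj a f" "adj f b" "a \<noteq> b" shows "f \<in> N"
proof -
  have "f \<in> E" using assms(1) by (simp add: adj_def)
  then show ?thesis unfolding N_def using assms(1,3) adj_sym[OF assms(2)] by blast
qed

definition Cfs where "Cfs fs \<longleftrightarrow> 3 \<le> length fs \<and> set fs \<subseteq> E \<and> successively (\<lambda>e f. e \<inter> f \<noteq> {}) fs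
   \<and> distinct (tl fs) \<and> distinct (butlast fs) \<and> (length fs = 3 \<longrightarrow> fs!0 \<noteq> fs!2)"

lemma Cfs_neq:
  assumes "Cfs fs" "i < j" "j < length fs" "i \<noteq> 0 \<or> j \<noteq> length fs - 1 \<or> length fs = 3"
  shows "fs!i \<noteq> fs!j"
proof -
  from assms(1) have d1: "distinct (tl fs)" and d2: "distinct (butlast fs)" and l: "3 \<le> length fs"
    and c3: "length fs = 3 \<longrightarrow> fs!0 \<noteq> fs!2" by (auto simp: Cfs_def)
  consider "i \<noteq> 0" | "j \<noteq> length fs - 1" | "i = 0" "j = length fs - 1" "length fs = 3" using assms(4) by blast
  then show ?thesis
  proof cases
    case 1
    have "tl fs ! (i - 1) \<noteq> tl fs ! (j - 1)" using d1 1 assms(2,3) by (simp add: nth_eq_iff_index_eq)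
    then show ?thesis using 1 assms(2,3) by (simp add: nth_tl)
  next
    case 2
    have "butlast fs ! i \<noteq> butlast fs ! j" using d2 2 assms(2,3) by (simp add: nth_eq_iff_index_eq)
    then show ?thesis using 2 assms(2,3) by (simp add: nth_butlast)
  next
    case 3 then show ?thesis using c3 by simp
  qed
qed

lemma Cfs_len: "Cfs fs \<Longrightarrow> 3 \<le> length fs" by (simp add: Cfs_def)

lemma Cfs_adj: assumes "Cfs fs" "Suc i < length fs" shows "adj (fs!i) (fs!Suc i)"
proof -
  have "i \<noteq> 0 \<or> Suc i \<noteq> length fs - 1 \<or> length fs = 3" using Cfs_len[OF assms(1)] by arith
  then have "fs!i \<noteq> fs!Suc i" using Cfs_neq[OF assms(1) lessI assms(2)] by blast
  moreover have "fs!i \<inter> fs!Suc i \<noteq> {}" using assms successively_nth[of "\<lambda>e f. e \<inter> f \<noteq> {}" fs i] by (simp add: Cfs_def)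
  moreover have "fs!i \<in> set fs" "fs!Suc i \<in> set fs" using assms(2) by simp_all
  then have "fs!i \<in> E" "fs!Suc i \<in> E" using assms(1) by (auto simp: Cfs_def)
  ultimately show ?thesis by (simp add: adj_def)
qed

lemma Cfs_neq2: assumes "Cfs fs" "Suc (Suc i) < length fs" shows "fs!i \<noteq> fs!Suc (Suc i)"
proof -
  have "i \<noteq> 0 \<or> Suc (Suc i) \<noteq> length fs - 1 \<or> length fs = 3" using assms(2) by arith
  moreover have "i < Suc (Suc i)" by simp
  ultimately show ?thesis using Cfs_neq[OF assms(1) _ assms(2)] by blast
qed

lemma Cfs_angle: assumes "Cfs fs" "i < length fs - 1"
  shows "path_edges fs ! i = {fs!i, fs!Suc i}" "path_edges fs ! i \<in> A1"
proof -
  show 1: "path_edges fs ! i = {fs!i, fs!Suc i}" using assms by (simp add: nth_path_edges)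
  have "adj (fs!i) (fs!Suc i)" using assms Cfs_adj[OF assms(1), of i] by simp
  then show "path_edges fs ! i \<in> A1" unfolding 1 A1_def by blast
qed

lemma Cfs_distinct: assumes c: "Cfs fs" shows "distinct (path_edges fs)"
proof -
  have key: "path_edges fs ! i \<noteq> path_edges fs ! j" if ij: "i < j" "j < length fs - 1" for i j
  proof
    assume eq: "path_edges fs ! i = path_edges fs ! j"
    then have "{fs!i, fs!Suc i} = {fs!j, fs!Suc j}" using ij Cfs_angle[OF c] by simp
    then consider "fs!i = fs!j" | "fs!i = fs!Suc j" "fs!Suc i = fs!j" by (auto simp: doubleton_eq_iff)
    then show False
    proof cases
      case 1
      have disj: "i \<noteq> 0 \<or> j \<noteq> length fs - 1 \<or> length fs = 3" using ij by arith
      have j': "j < length fs" using ij by arith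
      show False using Cfs_neq[OF c ij(1) j' disj] 1 by blast
    next
      case 2
      show False
      proof (cases "Suc i < j")
        case True
        have j': "j < length fs" using ij by arith
        have d: "Suc i \<noteq> 0 \<or> j \<noteq> length fs - 1 \<or> length fs = 3" by simp
        show False using Cfs_neq[OF c True j' d] 2 by simp
      next
        case False then have "j = Suc i" using ij by auto
        then have "Suc (Suc i) < length fs" using ij by arith
        from Cfs_neq2[OF c this] show False using 2 \<open>j = Suc i\<close> by simp
      qed
    qed
  qed
  show ?thesis unfolding distinct_conv_nth
  proof (intro allI impI)
    fix i j assume "i < length (path_edges fs)" "j < length (path_edges fs)" "i \<noteq> j"
    then consider "i < j" "j < length fs - 1" | "j < i" "i < length fs - 1" by (cases "i < j") auto
    then show "path_edges fs ! i \<noteq> path_edges fs ! j"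
      by cases (use key in auto)
  qed
qed

lemma Cfs_gpath: assumes c: "Cfs fs" shows "is_gpath (A1,E2) (path_edges fs)"
proof -
  have l: "3 \<le> length fs" using c by (simp add: Cfs_def)
  have "length (path_edges fs) \<noteq> 0" using l by simp
  then have ne: "path_edges fs \<noteq> []" by blast
  have s: "set (path_edges fs) \<subseteq> A1"
    using Cfs_angle[OF c] by (auto simp: in_set_conv_nth)
  have "successively (\<lambda>u v. {u,v} \<in> E2) (path_edges fs)"
    unfolding successively_conv_nth
  proof (intro allI impI)
    fix i assume i: "Suc i < length (path_edges fs)"
    have d: "path_edges fs ! i \<noteq> path_edges fs ! Suc i"
      using Cfs_distinct[OF c] i by (simp add: nth_eq_iff_index_eq)
    have "fs ! Suc i \<in> path_edges fs ! i \<inter> path_edges fs ! Suc i"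
      using Cfs_angle[OF c, of i] Cfs_angle[OF c, of "Suc i"] i by auto
    then show "{path_edges fs ! i, path_edges fs ! Suc i} \<in> E2"
      using d Cfs_angle(2)[OF c, of i] Cfs_angle(2)[OF c, of "Suc i"] i unfolding E2_def by auto
  qed
  then show ?thesis using ne s Cfs_distinct[OF c] by (simp add: is_gpath_iff)
qed

lemma Cfs_hd: assumes c: "Cfs fs" shows "hd (path_edges fs) = {fs!0, fs!1}"
proof -
  have l: "3 \<le> length fs" using c by (simp add: Cfs_def)
  then obtain x y zs where "fs = x#y#zs" by (metis Suc_le_length_iff numeral_3_eq_3 Suc_leD)
  then show ?thesis by simp
qed

lemma Cfs_last: assumes c: "Cfs fs" shows "last (path_edges fs) = {fs!(length fs - 2), fs!(length fs - 1)}"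
proof -
  have l: "3 \<le> length fs" using c by (simp add: Cfs_def)
  have "length (path_edges fs) \<noteq> 0" using l by simp
  then have ne: "path_edges fs \<noteq> []" by blast
  have "last (path_edges fs) = path_edges fs ! (length fs - 2)" using ne by (simp add: last_conv_nth numeral_2_eq_2)
  also have "\<dots> = {fs!(length fs - 2), fs!Suc (length fs - 2)}" using l by (simp add: nth_path_edges)
  also have "Suc (length fs - 2) = length fs - 1" using l by arith
  finally show ?thesis .
qed

lemma Cfs_pe2: assumes c: "Cfs fs" and i: "Suc (Suc i) < length fs"
  shows "path_edges (path_edges fs) ! i = {{fs!i, fs!Suc i},{fs!Suc i, fs!Suc (Suc i)}}"
  using i Cfs_angle[OF c, of i] Cfs_angle[OF c, of "Suc i"] by (simp add: nth_path_edges)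

lemma rainbow_by_fs:
  assumes h: "\<And>A B. A \<in> A1 \<Longrightarrow> B \<in> A1 \<Longrightarrow> A \<noteq> B \<Longrightarrow> \<exists>fs. Cfs fs \<and> {fs!0, fs!1} = A \<and>
      {fs!(length fs - 2), fs!(length fs - 1)} = B \<and>
      (\<forall>i j. i < j \<longrightarrow> Suc (Suc j) < length fs \<longrightarrow>
         c {{fs!i, fs!Suc i},{fs!Suc i, fs!Suc (Suc i)}} \<noteq> c {{fs!j, fs!Suc j},{fs!Suc j, fs!Suc (Suc j)}})"
  shows "rainbow_connected (A1, E2) c"
  unfolding rainbow_connected_def
proof (intro ballI)
  fix u v assume u: "u \<in> fst (A1, E2)" and v: "v \<in> fst (A1, E2)"
  show "\<exists>xs. is_gpath (A1, E2) xs \<and> hd xs = u \<and> last xs = v \<and> rainbow_path c xs"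
  proof (cases "u = v")
    case True
    then show ?thesis using u by (intro exI[of _ "[u]"]) (simp add: is_gpath_iff rainbow_path_def)
  next
    case False
    from h[of u v] u v False obtain fs where fs: "Cfs fs" "{fs!0, fs!1} = u"
      "{fs!(length fs - 2), fs!(length fs - 1)} = v"
      and col: "\<forall>i j. i < j \<longrightarrow> Suc (Suc j) < length fs \<longrightarrow>
         c {{fs!i, fs!Suc i},{fs!Suc i, fs!Suc (Suc i)}} \<noteq> c {{fs!j, fs!Suc j},{fs!Suc j, fs!Suc (Suc j)}}"
      by auto
    let ?xs = "path_edges fs"
    have len: "length (path_edges ?xs) = length fs - 2" by simp
    have "distinct (map c (path_edges ?xs))"
      unfolding distinct_conv_nth
    proof (intro allI impI)
      fix i j assume i: "i < length (map c (path_edges ?xs))" and j: "j < length (map c (path_edges ?xs))"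
        and ij: "i \<noteq> j"
      have i': "Suc (Suc i) < length fs" and j': "Suc (Suc j) < length fs" using i j by auto
      have "c (path_edges ?xs ! i) \<noteq> c (path_edges ?xs ! j)"
      proof (cases "i < j")
        case True
        then show ?thesis using col i' j' Cfs_pe2[OF fs(1) i'] Cfs_pe2[OF fs(1) j'] by simp
      next
        case False then have "j < i" using ij by simp
        then have "c (path_edges ?xs ! j) \<noteq> c (path_edges ?xs ! i)"
          using col i' j' Cfs_pe2[OF fs(1) i'] Cfs_pe2[OF fs(1) j'] by simp
        then show ?thesis by metis
      qed
      then show "map c (path_edges ?xs) ! i \<noteq> map c (path_edges ?xs) ! j" using i j by simp
    qed
    then show ?thesis using Cfs_gpath[OF fs(1)] Cfs_hd[OF fs(1)] Cfs_last[OF fs(1)] fs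
      by (intro exI[of _ ?xs]) (auto simp: rainbow_path_def)
  qed
qed

lemma rainbow_scheme:
  assumes h: "\<And>A B. A \<in> A1 \<Longrightarrow> B \<in> A1 \<Longrightarrow> A \<noteq> B \<Longrightarrow> \<exists>fs. Cfs fs \<and> {fs!0, fs!1} = A \<and>
      {fs!(length fs - 2), fs!(length fs - 1)} = B \<and>
      (\<forall>i j. i < j \<longrightarrow> Suc (Suc j) < length fs \<longrightarrow>
         col {fs!i, fs!Suc i, fs!Suc (Suc i)} (fs!Suc i) \<noteq> col {fs!j, fs!Suc j, fs!Suc (Suc j)} (fs!Suc j))"
  shows "rainbow_connected (A1, E2) (\<lambda>\<epsilon>. col (\<Union>\<epsilon>) (the_elem (\<Inter>\<epsilon>)))"
proof (rule rainbow_by_fs)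
  fix A B assume AB: "A \<in> A1" "B \<in> A1" "A \<noteq> B"
  from h[OF AB] obtain fs where fs: "Cfs fs" "{fs!0, fs!1} = A" "{fs!(length fs - 2), fs!(length fs - 1)} = B"
    and col: "\<forall>i j. i < j \<longrightarrow> Suc (Suc j) < length fs \<longrightarrow>
         col {fs!i, fs!Suc i, fs!Suc (Suc i)} (fs!Suc i) \<noteq> col {fs!j, fs!Suc j, fs!Suc (Suc j)} (fs!Suc j)"
    by blast
  have iu: "(\<lambda>\<epsilon>. col (\<Union>\<epsilon>) (the_elem (\<Inter>\<epsilon>))) {{fs!i, fs!Suc i},{fs!Suc i, fs!Suc (Suc i)}}
       = col {fs!i, fs!Suc i, fs!Suc (Suc i)} (fs!Suc i)"
    if i: "Suc (Suc i) < length fs" for i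
  proof -
    have "adj (fs!i) (fs!Suc i)" using Cfs_adj[OF fs(1)] i by simp
    moreover have "adj (fs!Suc i) (fs!Suc (Suc i))" using Cfs_adj[OF fs(1)] i by simp
    moreover have "fs!i \<noteq> fs!Suc (Suc i)" using Cfs_neq2[OF fs(1) i] .
    ultimately have a: "\<Inter>{{fs!i, fs!Suc i},{fs!Suc i, fs!Suc (Suc i)}} = {fs!Suc i}"
      and b: "\<Union>{{fs!i, fs!Suc i},{fs!Suc i, fs!Suc (Suc i)}} = {fs!i, fs!Suc i, fs!Suc (Suc i)}"
      using inter_union by blast+
    show ?thesis by (simp only: a b the_elem_eq)
  qed
  show "\<exists>fs. Cfs fs \<and> {fs!0, fs!1} = A \<and> {fs!(length fs - 2), fs!(length fs - 1)} = B \<and>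
      (\<forall>i j. i < j \<longrightarrow> Suc (Suc j) < length fs \<longrightarrow>
         (\<lambda>\<epsilon>. col (\<Union>\<epsilon>) (the_elem (\<Inter>\<epsilon>))) {{fs!i, fs!Suc i},{fs!Suc i, fs!Suc (Suc i)}} \<noteq>
         (\<lambda>\<epsilon>. col (\<Union>\<epsilon>) (the_elem (\<Inter>\<epsilon>))) {{fs!j, fs!Suc j},{fs!Suc j, fs!Suc (Suc j)}})"
  proof (intro exI[of _ fs] conjI fs allI impI)
    fix i j assume ij: "i < j" "Suc (Suc j) < length fs"
    then have i': "Suc (Suc i) < length fs" by simp
    show "(\<lambda>\<epsilon>. col (\<Union>\<epsilon>) (the_elem (\<Inter>\<epsilon>))) {{fs!i, fs!Suc i},{fs!Suc i, fs!Suc (Suc i)}} \<noteq>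
         (\<lambda>\<epsilon>. col (\<Union>\<epsilon>) (the_elem (\<Inter>\<epsilon>))) {{fs!j, fs!Suc j},{fs!Suc j, fs!Suc (Suc j)}}"
      unfolding iu[OF i'] iu[OF ij(2)] using col ij by simp
  qed
qed

lemma route_fs:
  assumes A: "A \<in> A1" and B: "B \<in> A1" "A \<noteq> B" and W: "W \<subseteq> E" and mw: "minwalk W A B gs"
  shows "\<exists>a b. A = {a, hd gs} \<and> adj a (hd gs) \<and> B = {last gs, b} \<and> adj (last gs) b \<and> Cfs (a # gs @ [b])"
proof -
  have w: "walk W A B gs" using mw by (simp add: minwalk_def)
  note mp = minwalk_props[OF mw]
  have ne: "gs \<noteq> []" and hA: "hd gs \<in> A" and lB: "last gs \<in> B" and gW: "set gs \<subseteq> W"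
    and sg: "successively (\<lambda>e f. e \<inter> f \<noteq> {}) gs" using w by (auto simp: walk_def)
  obtain a where a: "A = {a, hd gs}" "adj a (hd gs)" using A1_other[OF A hA] by blast
  obtain b' where b': "B = {b', last gs}" "adj b' (last gs)" using A1_other[OF B(1) lB] by blast
  define b where "b = b'"
  have bB: "B = {last gs, b}" "adj (last gs) b" using b'(1) adj_sym[OF b'(2)] by (auto simp: b_def insert_commute)
  have aE: "a \<in> E" and bE: "b \<in> E" using a bB by (auto simp: adj_def)
  have "b \<notin> set gs"
  proof
    assume "b \<in> set gs"
    then obtain i where i: "i < length gs" "gs!i = b" by (auto simp: in_set_conv_nth)
    show False
    proof (cases "Suc i < length gs")
      case True then show False using mp(3)[OF True] i bB by auto
    next
      case False then have "i = length gs - 1" using i by auto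
      then have "gs!i = last gs" using ne by (simp add: last_conv_nth)
      then show False using i bB by (auto simp: adj_def)
    qed
  qed
  moreover have "a \<notin> set gs"
  proof
    assume "a \<in> set gs"
    then obtain i where i: "i < length gs" "gs!i = a" by (auto simp: in_set_conv_nth)
    show False
    proof (cases "i = 0")
      case False then show False using mp(2)[of i] i a by auto
    next
      case True then have "gs!i = hd gs" using ne by (simp add: hd_conv_nth)
      then show False using i a by (auto simp: adj_def)
    qed
  qed
  moreover have "length gs = 1 \<Longrightarrow> a \<noteq> b"
  proof
    assume "length gs = 1" "a = b"
    then have "hd gs = last gs" using ne by (cases gs) auto
    then show False using a bB B(2) \<open>a = b\<close> by (auto simp: insert_commute)
  qed
  moreover have "successively (\<lambda>e f. e \<inter> f \<noteq> {}) (a # gs @ [b])"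
    using sg a(2) bB(2) ne by (auto simp: successively_append_iff successively_Cons adj_def)
  moreover have "set (a # gs @ [b]) \<subseteq> E" using aE bE gW W by auto
  moreover have "length gs \<ge> 1" using ne by (cases gs) auto
  ultimately have "Cfs (a # gs @ [b])" using mp(1) ne
    by (auto simp: Cfs_def butlast_append nth_append)
  then show ?thesis using a bB by blast
qed

lemma good_fs:
  assumes conn: "\<And>x y. x \<in> W \<Longrightarrow> y \<in> W \<Longrightarrow> \<exists>ws. walk W {x} {y} ws" and W: "W \<subseteq> E"
    and AB: "A \<in> A1" "B \<in> A1" "A \<noteq> B" and x: "x \<in> A \<inter> W" and y: "y \<in> B \<inter> W"
  shows "\<exists>gs a b. minwalk W A B gs \<and> A = {a, hd gs} \<and> adj a (hd gs) \<and> B = {last gs, b} \<and>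
     adj (last gs) b \<and> Cfs (a # gs @ [b])"
proof -
  from conn[of x y] x y obtain ws where "walk W {x} {y} ws" by blast
  then have "walk W A B ws" using x y by (auto simp: walk_def)
  then obtain gs where "minwalk W A B gs" using minwalk_exists by blast
  with route_fs[OF AB W this] show ?thesis by blast
qed

end

context sg
begin

lemma E_conn: assumes c: "connected_graph (V,E)" and x: "x \<in> E" and y: "y \<in> E"
  shows "\<exists>ws. walk E {x} {y} ws"
proof -
  obtain u where u: "u \<in> x" "u \<in> V" using x by (auto elim!: edgeE)
  obtain w where w: "w \<in> y" "w \<in> V" using y by (auto elim!: edgeE)
  from c u(2) w(2) obtain vs where vs: "is_gpath (V,E) vs" "hd vs = u" "last vs = w"
    unfolding connected_graph_def by auto
  have ne: "vs \<noteq> []" and sv: "successively (\<lambda>a b. {a,b} \<in> E) vs" using vs(1) by (auto simp: is_gpath_iff)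
  let ?ws = "x # path_edges vs @ [y]"
  have set: "set ?ws \<subseteq> E" using pe_subset[OF sv] x y by auto
  have succ: "successively (\<lambda>e f. e \<inter> f \<noteq> {}) ?ws"
  proof (cases "length vs \<ge> 2")
    case True
    have "length (path_edges vs) \<noteq> 0" using True by simp
    then have pne: "path_edges vs \<noteq> []" by blast
    from pe_hd_last[OF True] have "u \<in> hd (path_edges vs)" "w \<in> last (path_edges vs)" using vs by auto
    then show ?thesis using pne pe_meet[of vs] u w
      by (auto simp: successively_append_iff successively_Cons)
  next
    case False
    then have "length vs = 1" using ne by (cases vs) (auto simp: Suc_le_eq)
    then have "\<exists>v. vs = [v]" by (simp add: length_Suc_conv)
    then obtain v where "vs = [v]" by blast
    then have "u = w" "path_edges vs = []" using vs by auto
    then show ?thesis using u w by auto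
  qed
  then show ?thesis using set by (intro exI[of _ ?ws]) (simp add: walk_def)
qed

lemma fs_idx:
  assumes "gs \<noteq> []"
  shows "(a#gs@[b])!0 = a" "(a#gs@[b])!1 = hd gs" "(a#gs@[b])!(length (a#gs@[b]) - 2) = last gs"
    "(a#gs@[b])!(length (a#gs@[b]) - 1) = b" "\<And>i. i < length gs \<Longrightarrow> (a#gs@[b])!Suc i = gs!i"
    "length (a#gs@[b]) = length gs + 2"
  using assms by (auto simp: nth_append hd_conv_nth last_conv_nth)

lemma Cfs_N: assumes "Cfs fs" "Suc (Suc i) < length fs" shows "fs!Suc i \<in> N"
  using N_mem[OF Cfs_adj[OF assms(1)] Cfs_adj[OF assms(1)] Cfs_neq2[OF assms]] assms(2) by simp

lemma E2_color: assumes "\<epsilon> \<in> E2" shows "\<exists>a f b. \<Inter>\<epsilon> = {f} \<and> \<Union>\<epsilon> = {a,f,b} \<and> f \<in> N \<and> adj a f \<and> adj f b \<and> a \<noteq> b"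
proof -
  from E2_cases[OF assms] obtain a f b where h: "\<epsilon> = {{a,f},{f,b}}" "adj a f" "adj f b" "a \<noteq> b" by blast
  have iu: "\<Inter>{{a,f},{f,b}} = {f} \<and> \<Union>{{a,f},{f,b}} = {a,f,b}" by (rule inter_union[OF h(2-4)])
  have fN: "f \<in> N" by (rule N_mem[OF h(2-4)])
  have "\<Inter>\<epsilon> = {f}" "\<Union>\<epsilon> = {a,f,b}" using iu h(1) by simp_all
  then show ?thesis using h(2-4) fN by (intro exI[of _ a] exI[of _ f] exI[of _ b] conjI) simp_all
qed

lemma A1_ne: "A \<in> A1 \<Longrightarrow> \<exists>x. x \<in> A" by (auto simp: A1_def)

lemma base_col: assumes conn: "connected_graph (V,E)"
  shows "\<exists>c. (\<forall>\<epsilon>\<in>snd (A1,E2). c \<epsilon> < card N) \<and> rainbow_connected (A1,E2) c"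
proof -
  obtain idx where idx: "bij_betw idx N {0..<card N}" using ex_bij_betw_finite_nat[OF finN] by blast
  let ?c = "\<lambda>\<epsilon>. (\<lambda>X f. idx f) (\<Union>\<epsilon>) (the_elem (\<Inter>\<epsilon>))"
  have bound: "\<forall>\<epsilon>\<in>snd (A1,E2). ?c \<epsilon> < card N"
  proof
    fix \<epsilon> assume "\<epsilon> \<in> snd (A1,E2)"
    then obtain a f b where "\<Inter>\<epsilon> = {f}" "f \<in> N" using E2_color[of \<epsilon>] by auto
    then show "?c \<epsilon> < card N" using idx by (auto simp: bij_betw_def)
  qed
  have "rainbow_connected (A1, E2) ?c"
  proof (rule rainbow_scheme)
    fix A B assume AB: "A \<in> A1" "B \<in> A1" "A \<noteq> B"
    obtain x where x: "x \<in> A" using A1_ne[OF AB(1)] by blast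
    obtain y where y: "y \<in> B" using A1_ne[OF AB(2)] by blast
    have "x \<in> A \<inter> E" "y \<in> B \<inter> E" using x y A1_sub AB by auto
    from good_fs[OF E_conn[OF conn] order.refl AB this] obtain gs a b where
      g: "minwalk E A B gs" "A = {a, hd gs}" "B = {last gs, b}" "Cfs (a # gs @ [b])" by blast
    have ne: "gs \<noteq> []" using g(1) by (simp add: minwalk_def walk_def)
    have dg: "distinct gs" using minwalk_props(1)[OF g(1)] .
    let ?fs = "a # gs @ [b]"
    note fi = fs_idx[OF ne, where a=a and b=b]
    show "\<exists>fs. Cfs fs \<and> {fs!0, fs!1} = A \<and> {fs!(length fs - 2), fs!(length fs - 1)} = B \<and>
      (\<forall>i j. i < j \<longrightarrow> Suc (Suc j) < length fs \<longrightarrow>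
         (\<lambda>X f. idx f) {fs!i, fs!Suc i, fs!Suc (Suc i)} (fs!Suc i) \<noteq> (\<lambda>X f. idx f) {fs!j, fs!Suc j, fs!Suc (Suc j)} (fs!Suc j))"
    proof (intro exI[of _ ?fs] conjI allI impI)
      show "Cfs ?fs" by (rule g(4))
      show "{?fs!0, ?fs!1} = A" using fi g(2) by simp
      show "{?fs!(length ?fs - 2), ?fs!(length ?fs - 1)} = B" using fi g(3) by simp
      fix i j assume ij: "i < j" "Suc (Suc j) < length ?fs"
      have i': "Suc (Suc i) < length ?fs" using ij by simp
      have N1: "?fs!Suc i \<in> N" using Cfs_N[OF g(4) i'] .
      have N2: "?fs!Suc j \<in> N" using Cfs_N[OF g(4) ij(2)] .
      have "?fs!Suc i = gs!i" "?fs!Suc j = gs!j" using fi ij by auto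
      moreover have "gs!i \<noteq> gs!j" using dg ij fi by (simp add: nth_eq_iff_index_eq)
      ultimately have "?fs!Suc i \<noteq> ?fs!Suc j" by simp
      then show "(\<lambda>X f. idx f) {?fs!i, ?fs!Suc i, ?fs!Suc (Suc i)} (?fs!Suc i) \<noteq>
          (\<lambda>X f. idx f) {?fs!j, ?fs!Suc j, ?fs!Suc (Suc j)} (?fs!Suc j)"
        using N1 N2 idx by (auto simp: bij_betw_def inj_on_def)
    qed
  qed
  then have "(\<forall>\<epsilon>\<in>snd (A1,E2). ?c \<epsilon> < card N) \<and> rainbow_connected (A1, E2) ?c" using bound by simp
  then show ?thesis by (intro exI[of _ "\<lambda>\<epsilon>. idx (the_elem (\<Inter>\<epsilon>))"]) simp
qed

lemma base_bound: assumes conn: "connected_graph (V,E)" shows "rc (A1,E2) \<le> card N"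
  using base_col[OF conn] rc_le by blast

lemma deg_card: "degree (V,E) v = card {e\<in>E. v \<in> e}" by (simp add: degree_def)

lemma pendent_le: "card (pendent_2paths (V,E)) \<le> card E - card N"
proof -
  define \<psi> where "\<psi> e = insert e {g\<in>E. g \<noteq> e \<and> g \<inter> e \<noteq> {}}" for e
  have "pendent_2paths (V,E) \<subseteq> \<psi> ` (E - N)"
  proof
    fix P assume "P \<in> pendent_2paths (V,E)"
    then obtain xs where xs: "P = set (path_edges xs)" "is_gpath (V,E) xs" "length xs = 3"
      "degree (V,E) (xs!0) = 1" "degree (V,E) (xs!1) = 2" unfolding pendent_2paths_def by blast
    have "\<exists>x y z. xs = [x,y,z]" using xs(3) by (simp add: numeral_3_eq_3 length_Suc_conv) blast
    then obtain x y z where xyz: "xs = [x,y,z]" by blast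
    have d: "x \<noteq> y" "y \<noteq> z" "x \<noteq> z" and e1: "{x,y} \<in> E" and e2: "{y,z} \<in> E"
      using xs(2) xyz by (auto simp: is_gpath_iff)
    have P: "P = {{x,y},{y,z}}" using xs(1) xyz by simp
    have dx: "card {e\<in>E. x \<in> e} = 1" and dy: "card {e\<in>E. y \<in> e} = 2"
      using xs(4,5) xyz by (simp_all add: degree_def)
    have Ex: "{e\<in>E. x \<in> e} = {{x,y}}"
    proof -
      from dx obtain t where t: "{e\<in>E. x \<in> e} = {t}" using card_1_singletonE by blast
      moreover have "{x,y} \<in> {e\<in>E. x \<in> e}" using e1 by simp
      ultimately show ?thesis by auto
    qed
    have Ey: "{e\<in>E. y \<in> e} = {{x,y},{y,z}}"
    proof -
      have sub: "{{x,y},{y,z}} \<subseteq> {e\<in>E. y \<in> e}" using e1 e2 by auto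
      have "card {{x,y},{y,z}} = 2" using d by (auto simp: doubleton_eq_iff)
      moreover have "finite {e\<in>E. y \<in> e}" using finE by simp
      ultimately show ?thesis using card_subset_eq[OF _ sub] dy by simp
    qed
    have nb: "{g\<in>E. g \<noteq> {x,y} \<and> g \<inter> {x,y} \<noteq> {}} = {{y,z}}"
    proof
      show "{g\<in>E. g \<noteq> {x,y} \<and> g \<inter> {x,y} \<noteq> {}} \<subseteq> {{y,z}}"
      proof
        fix g assume g: "g \<in> {g\<in>E. g \<noteq> {x,y} \<and> g \<inter> {x,y} \<noteq> {}}"
        then have "x \<in> g \<or> y \<in> g" by auto
        then show "g \<in> {{y,z}}"
        proof
          assume "x \<in> g" then have "g \<in> {e\<in>E. x \<in> e}" using g by simp
          then show ?thesis using Ex g by simp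
        next
          assume "y \<in> g" then have "g \<in> {e\<in>E. y \<in> e}" using g by simp
          then show ?thesis using Ey g by auto
        qed
      qed
      show "{{y,z}} \<subseteq> {g\<in>E. g \<noteq> {x,y} \<and> g \<inter> {x,y} \<noteq> {}}" using e2 d by (auto simp: doubleton_eq_iff)
    qed
    have "\<psi> {x,y} = P" unfolding \<psi>_def nb P by simp
    moreover have "{x,y} \<notin> N"
    proof
      assume "{x,y} \<in> N"
      then obtain a b where ab: "a \<noteq> b" "adj a {x,y}" "adj b {x,y}" unfolding N_def by blast
      have "a \<in> {g\<in>E. g \<noteq> {x,y} \<and> g \<inter> {x,y} \<noteq> {}}" "b \<in> {g\<in>E. g \<noteq> {x,y} \<and> g \<inter> {x,y} \<noteq> {}}"
        using ab by (auto simp: adj_def)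
      then have "a \<in> {{y,z}}" "b \<in> {{y,z}}" unfolding nb .
      then show False using ab(1) by simp
    qed
    ultimately show "P \<in> \<psi> ` (E - N)" using e1 by blast
  qed
  then have "card (pendent_2paths (V,E)) \<le> card (E - N)"
    using surj_card_le finE by (metis finite_Diff)
  also have "\<dots> = card E - card N" using card_Diff_subset[OF finN N_sub] .
  finally show ?thesis .
qed

end

context sg
begin

lemma tri_key:
  assumes tri: "adj e1 e2" "adj e1 e3" "adj e2 e3"
    and mw: "minwalk E A B gs"
    and nS1: "\<not> (a = e1 \<and> gs!0 = e3 \<and> 2 \<le> length gs \<and> gs!1 = e2)"
    and nS2: "\<not> (b = e1 \<and> gs!(length gs - 1) = e3 \<and> 2 \<le> length gs \<and> gs!(length gs - 2) = e2)"
    and t: "t < length gs" "gs!t = e3" and k: "k < length gs" "k \<noteq> t"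
  shows "(if e1 \<in> {(a#gs@[b])!t, (a#gs@[b])!Suc t, (a#gs@[b])!Suc (Suc t)} then e2 else e1) \<noteq> gs!k"
proof
  let ?fs = "a#gs@[b]"
  let ?X = "{?fs!t, ?fs!Suc t, ?fs!Suc (Suc t)}"
  let ?ch = "if e1 \<in> ?X then e2 else e1"
  assume eq: "?ch = gs!k"
  note mp = minwalk_props[OF mw]
  have d12: "e1 \<noteq> e2" "e1 \<noteq> e3" "e2 \<noteq> e3" using tri by (auto simp: adj_def)
  have ne: "gs \<noteq> []" using t by auto
  have f1: "?fs!Suc t = e3" using t by (simp add: nth_append)
  have f0: "?fs!t = (if t = 0 then a else gs!(t-1))" using t by (cases t) (auto simp: nth_append)
  have f2: "?fs!Suc (Suc t) = (if Suc t < length gs then gs!(Suc t) else b)" using t by (auto simp: nth_append)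
  have meet: "gs!k \<inter> gs!t \<noteq> {}"
  proof -
    have "?ch \<inter> e3 \<noteq> {}" using tri by (auto simp: adj_def)
    then show ?thesis using eq t by simp
  qed
  have "\<not> Suc t < k" using mp(4)[of t k] meet k by auto
  moreover have "\<not> Suc k < t" using mp(4)[of k t] meet t by (auto simp: Int_commute)
  ultimately have kk: "k = Suc t \<or> Suc k = t" using k by arith
  have ch2: "?ch = e2 \<and> e1 \<in> ?X"
  proof -
    have "gs!k \<in> ?X" using kk f0 f2 k by auto
    then have "?ch \<in> ?X" using eq by simp
    then show ?thesis using d12 by (auto split: if_splits)
  qed
  then have gk: "gs!k = e2" using eq by simp
  from kk show False
  proof
    assume kt: "k = Suc t"
    then have "?fs!Suc (Suc t) = e2" using f2 gk k by simp
    then have "?fs!t = e1" using ch2 d12 f1 by auto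
    show False
    proof (cases "t = 0")
      case True
      then show False using nS1 \<open>?fs!t = e1\<close> f0 t gk kt k by auto
    next
      case False
      then have "gs!(t-1) = e1" using \<open>?fs!t = e1\<close> f0 by simp
      moreover have "gs!(t-1) \<inter> gs!(Suc t) = {}" using mp(4)[of "t-1" "Suc t"] False k kt by auto
      ultimately show False using gk kt tri by (auto simp: adj_def)
    qed
  next
    assume kt: "Suc k = t"
    then have t0: "t \<noteq> 0" "t - 1 = k" by auto
    then have "?fs!t = gs!k" using f0 by simp
    then have "?fs!t = e2" using gk by simp
    then have "?fs!Suc (Suc t) = e1" using ch2 d12 f1 by auto
    show False
    proof (cases "Suc t < length gs")
      case True
      then have "gs!(Suc t) = e1" using \<open>?fs!Suc (Suc t) = e1\<close> f2 by simp
      moreover have "gs!k \<inter> gs!(Suc t) = {}" using mp(4)[of k "Suc t"] True kt by auto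
      ultimately show False using gk tri by (auto simp: adj_def)
    next
      case False
      then have "t = length gs - 1" "b = e1" using \<open>?fs!Suc (Suc t) = e1\<close> f2 t by auto
      moreover have "length gs - 2 = k" using \<open>t = length gs - 1\<close> kt by arith
      ultimately show False using nS2 t gk kt by auto
    qed
  qed
qed

lemma tri_colors:
  assumes tri: "adj e1 e2" "adj e1 e3" "adj e2 e3"
    and mw: "minwalk E A B gs" and fsC: "Cfs (a#gs@[b])"
    and nS1: "\<not> (a = e1 \<and> gs!0 = e3 \<and> 2 \<le> length gs \<and> gs!1 = e2)"
    and nS2: "\<not> (b = e1 \<and> gs!(length gs - 1) = e3 \<and> 2 \<le> length gs \<and> gs!(length gs - 2) = e2)"
    and inj: "inj_on idx (N - {e3})"
    and ij: "i < j" "Suc (Suc j) < length (a#gs@[b])"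
  shows "(\<lambda>X f. if f = e3 then (if e1 \<in> X then idx e2 else idx e1) else idx f)
       {(a#gs@[b])!i, (a#gs@[b])!Suc i, (a#gs@[b])!Suc (Suc i)} ((a#gs@[b])!Suc i) \<noteq>
     (\<lambda>X f. if f = e3 then (if e1 \<in> X then idx e2 else idx e1) else idx f)
       {(a#gs@[b])!j, (a#gs@[b])!Suc j, (a#gs@[b])!Suc (Suc j)} ((a#gs@[b])!Suc j)"
proof -
  let ?fs = "a#gs@[b]"
  define ch where "ch t = (if e1 \<in> {?fs!t, ?fs!Suc t, ?fs!Suc (Suc t)} then e2 else e1)" for t
  define g where "g t = (if ?fs!Suc t = e3 then ch t else ?fs!Suc t)" for t
  have col: "(\<lambda>X f. if f = e3 then (if e1 \<in> X then idx e2 else idx e1) else idx f)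
       {?fs!t, ?fs!Suc t, ?fs!Suc (Suc t)} (?fs!Suc t) = idx (g t)" for t
    by (simp add: g_def ch_def)
  have d12: "e1 \<noteq> e2" "e1 \<noteq> e3" "e2 \<noteq> e3" using tri by (auto simp: adj_def)
  have e1N: "e1 \<in> N" using N_mem[OF adj_sym[OF tri(1)] tri(2) d12(3)] .
  have e2N: "e2 \<in> N" using N_mem[OF tri(1) tri(3) d12(2)] .
  have i': "Suc (Suc i) < length ?fs" using ij by simp
  have gi: "?fs!Suc i = gs!i" "?fs!Suc j = gs!j" using ij by (auto simp: nth_append)
  have il: "i < length gs" "j < length gs" using ij by auto
  have dg: "gs!i \<noteq> gs!j" using minwalk_props(1)[OF mw] il ij by (simp add: nth_eq_iff_index_eq)
  have gN: "g t \<in> N - {e3}" if "Suc (Suc t) < length ?fs" for t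
    using Cfs_N[OF fsC that] e1N e2N d12 by (auto simp: g_def ch_def)
  have "g i \<noteq> g j"
  proof (cases "gs!i = e3")
    case True
    then have "gs!j \<noteq> e3" using dg by simp
    then have "g j = gs!j" "g i = ch i" using gi True by (simp_all add: g_def)
    moreover have "ch i \<noteq> gs!j" unfolding ch_def
      using tri_key[OF tri mw nS1 nS2 il(1) True il(2)] ij by simp
    ultimately show ?thesis by simp
  next
    case False
    show ?thesis
    proof (cases "gs!j = e3")
      case True
      then have "g i = gs!i" "g j = ch j" using gi False by (simp_all add: g_def)
      moreover have "ch j \<noteq> gs!i" unfolding ch_def
        using tri_key[OF tri mw nS1 nS2 il(2) True il(1)] ij by simp
      ultimately show ?thesis by simp
    next
      case False
      then show ?thesis using \<open>gs!i \<noteq> e3\<close> gi dg by (simp add: g_def)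
    qed
  qed
  then have "idx (g i) \<noteq> idx (g j)" using inj gN[OF i'] gN[OF ij(2)] by (auto simp: inj_on_def)
  then show ?thesis unfolding col .
qed

lemma tri_fs:
  assumes tri: "adj e1 e2" "adj e1 e3" "adj e2 e3"
    and inj: "inj_on idx (N - {e3})"
    and mw: "minwalk E A B gs" and AB: "A = {a, hd gs}" "B = {last gs, b}" and fsC: "Cfs (a#gs@[b])"
    and nS1: "\<not> (a = e1 \<and> gs!0 = e3 \<and> 2 \<le> length gs \<and> gs!1 = e2)"
    and nS2: "\<not> (b = e1 \<and> gs!(length gs - 1) = e3 \<and> 2 \<le> length gs \<and> gs!(length gs - 2) = e2)"
  shows "\<exists>fs. Cfs fs \<and> {fs!0, fs!1} = A \<and> {fs!(length fs - 2), fs!(length fs - 1)} = B \<and>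
      (\<forall>i j. i < j \<longrightarrow> Suc (Suc j) < length fs \<longrightarrow>
         (\<lambda>X f. if f = e3 then (if e1 \<in> X then idx e2 else idx e1) else idx f) {fs!i, fs!Suc i, fs!Suc (Suc i)} (fs!Suc i) \<noteq>
         (\<lambda>X f. if f = e3 then (if e1 \<in> X then idx e2 else idx e1) else idx f) {fs!j, fs!Suc j, fs!Suc (Suc j)} (fs!Suc j))"
proof -
  have ne: "gs \<noteq> []" using mw by (simp add: minwalk_def walk_def)
  note fi = fs_idx[OF ne, where a=a and b=b]
  show ?thesis
  proof (intro exI[of _ "a#gs@[b]"] conjI allI impI)
    show "Cfs (a#gs@[b])" by (rule fsC)
    show "{(a#gs@[b])!0, (a#gs@[b])!1} = A" using fi AB by simp
    show "{(a#gs@[b])!(length (a#gs@[b]) - 2), (a#gs@[b])!(length (a#gs@[b]) - 1)} = B" using fi AB by simp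
    fix i j assume "i < j" "Suc (Suc j) < length (a#gs@[b])"
    from tri_colors[OF tri mw fsC nS1 nS2 inj this] show
      "(\<lambda>X f. if f = e3 then (if e1 \<in> X then idx e2 else idx e1) else idx f) {(a#gs@[b])!i, (a#gs@[b])!Suc i, (a#gs@[b])!Suc (Suc i)} ((a#gs@[b])!Suc i) \<noteq>
       (\<lambda>X f. if f = e3 then (if e1 \<in> X then idx e2 else idx e1) else idx f) {(a#gs@[b])!j, (a#gs@[b])!Suc j, (a#gs@[b])!Suc (Suc j)} ((a#gs@[b])!Suc j)" .
  qed
qed

lemma minwalk_swap_hd:
  assumes mw: "minwalk W A B gs" and l: "2 \<le> length gs" and x: "x \<in> A" "x \<in> W" "x \<inter> gs!1 \<noteq> {}"
  shows "minwalk W A B (x # tl gs)"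
proof -
  obtain g0 g1 r where gs: "gs = g0 # g1 # r" using l by (metis Suc_le_length_iff numeral_2_eq_2)
  have w: "walk W A B gs" and mn: "\<And>ws. walk W A B ws \<Longrightarrow> length gs \<le> length ws"
    using mw by (auto simp: minwalk_def)
  have "walk W A B (x # tl gs)" using w x gs by (auto simp: walk_def)
  moreover have "length (x # tl gs) = length gs" using gs by simp
  ultimately show ?thesis using mn by (auto simp: minwalk_def)
qed

lemma minwalk_swap_last:
  assumes mw: "minwalk W A B gs" and l: "2 \<le> length gs" and x: "x \<in> B" "x \<in> W" "gs!(length gs - 2) \<inter> x \<noteq> {}"
  shows "minwalk W A B (butlast gs @ [x])"
proof -
  have w: "walk W A B gs" and mn: "\<And>ws. walk W A B ws \<Longrightarrow> length gs \<le> length ws"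
    using mw by (auto simp: minwalk_def)
  obtain ys y where gs: "gs = ys @ [y]" using l by (cases gs rule: rev_exhaust) auto
  have ly: "ys \<noteq> []" using l gs by auto
  have "gs!(length gs - 2) = last ys" using gs ly by (simp add: nth_append last_conv_nth numeral_2_eq_2)
  then have "last ys \<inter> x \<noteq> {}" using x by simp
  then have "walk W A B (ys @ [x])" using w x gs ly
    by (auto simp: walk_def successively_append_iff)
  moreover have "length (butlast gs @ [x]) = length gs" using gs by simp
  ultimately show ?thesis using mn gs by (auto simp: minwalk_def)
qed

lemma tri_bound:
  assumes conn: "connected_graph (V,E)" and tri: "adj e1 e2" "adj e1 e3" "adj e2 e3"
  shows "rc (A1,E2) < card N"
proof -
  have d12: "e1 \<noteq> e2" "e1 \<noteq> e3" "e2 \<noteq> e3" using tri by (auto simp: adj_def)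
  have e1N: "e1 \<in> N" using N_mem[OF adj_sym[OF tri(1)] tri(2) d12(3)] .
  have e2N: "e2 \<in> N" using N_mem[OF tri(1) tri(3) d12(2)] .
  have e3N: "e3 \<in> N" using N_mem[OF tri(2) adj_sym[OF tri(3)] d12(1)] .
  have fin': "finite (N - {e3})" using finN by simp
  obtain idx where idx: "bij_betw idx (N - {e3}) {0..<card (N - {e3})}" using ex_bij_betw_finite_nat[OF fin'] by blast
  have cN: "card (N - {e3}) = card N - 1" using e3N finN by simp
  have inj: "inj_on idx (N - {e3})" using idx by (simp add: bij_betw_def)
  have lt: "idx x < card N - 1" if "x \<in> N - {e3}" for x using idx that cN by (auto simp: bij_betw_def)
  let ?col = "\<lambda>X f. if f = e3 then (if e1 \<in> X then idx e2 else idx e1) else idx f"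
  let ?c = "\<lambda>\<epsilon>. ?col (\<Union>\<epsilon>) (the_elem (\<Inter>\<epsilon>))"
  have bound: "\<forall>\<epsilon>\<in>snd (A1,E2). ?c \<epsilon> < card N - 1"
  proof
    fix \<epsilon> assume "\<epsilon> \<in> snd (A1,E2)"
    then obtain f where f: "\<Inter>\<epsilon> = {f}" "f \<in> N" using E2_color[of \<epsilon>] by auto
    show "?c \<epsilon> < card N - 1"
      using f lt[of e1] lt[of e2] lt[of f] e1N e2N d12 by auto
  qed
  have "rainbow_connected (A1, E2) ?c"
  proof (rule rainbow_scheme)
    fix A B assume AB: "A \<in> A1" "B \<in> A1" "A \<noteq> B"
    obtain x where x: "x \<in> A" using A1_ne[OF AB(1)] by blast
    obtain y where y: "y \<in> B" using A1_ne[OF AB(2)] by blast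
    have "x \<in> A \<inter> E" "y \<in> B \<inter> E" using x y A1_sub AB by auto
    from good_fs[OF E_conn[OF conn] order.refl AB this] obtain gs a b where
      g: "minwalk E A B gs" "A = {a, hd gs}" "B = {last gs, b}" "Cfs (a # gs @ [b])" by blast
    have ne: "gs \<noteq> []" using g(1) by (simp add: minwalk_def walk_def)
    have dg: "distinct gs" using minwalk_props(1)[OF g(1)] .
    have e1E: "e1 \<in> E" using tri by (simp add: adj_def)
    have m12: "e1 \<inter> e2 \<noteq> {}" "e2 \<inter> e1 \<noteq> {}" using tri by (auto simp: adj_def)
    show "\<exists>fs. Cfs fs \<and> {fs!0, fs!1} = A \<and> {fs!(length fs - 2), fs!(length fs - 1)} = B \<and>
      (\<forall>i j. i < j \<longrightarrow> Suc (Suc j) < length fs \<longrightarrow>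
         ?col {fs!i, fs!Suc i, fs!Suc (Suc i)} (fs!Suc i) \<noteq> ?col {fs!j, fs!Suc j, fs!Suc (Suc j)} (fs!Suc j))"
    proof (cases "a = e1 \<and> gs!0 = e3 \<and> 2 \<le> length gs \<and> gs!1 = e2")
      case True
      let ?gs = "e1 # tl gs"
      have aA: "e1 \<in> A" using True g(2) by simp
      have mw': "minwalk E A B ?gs" using minwalk_swap_hd[OF g(1) _ aA e1E] True m12 by simp
      have "e3 \<notin> set (tl gs)" using dg True ne by (cases gs) auto
      then have n3: "e3 \<notin> set ?gs" using d12 by simp
      from route_fs[OF AB(1) AB(2) AB(3) order.refl mw'] obtain a' b' where
        r: "A = {a', hd ?gs}" "B = {last ?gs, b'}" "Cfs (a' # ?gs @ [b'])" by blast
      have "?gs!(length ?gs - 1) \<in> set ?gs" by (rule nth_mem) simp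
      then have "?gs!(length ?gs - 1) \<noteq> e3" using n3 by metis
      then have nS2': "\<not> (b' = e1 \<and> ?gs!(length ?gs - 1) = e3 \<and> 2 \<le> length ?gs \<and> ?gs!(length ?gs - 2) = e2)" by blast
      have nS1': "\<not> (a' = e1 \<and> ?gs!0 = e3 \<and> 2 \<le> length ?gs \<and> ?gs!1 = e2)" using d12 by simp
      show ?thesis using tri_fs[OF tri inj mw' r nS1' nS2'] .
    next
      case nS1: False
      show ?thesis
      proof (cases "b = e1 \<and> gs!(length gs - 1) = e3 \<and> 2 \<le> length gs \<and> gs!(length gs - 2) = e2")
        case True
        let ?gs = "butlast gs @ [e1]"
        have bB: "e1 \<in> B" using True g(3) by simp
        have mw': "minwalk E A B ?gs" using minwalk_swap_last[OF g(1) _ bB e1E] True m12 by simp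
        have "last gs = e3" using True ne by (simp add: last_conv_nth)
        then have "e3 \<notin> set (butlast gs)" using dg ne
          by (metis append_butlast_last_id distinct_append disjoint_iff list.set_intros(1))
        then have n3: "e3 \<notin> set ?gs" using d12 by simp
        from route_fs[OF AB(1) AB(2) AB(3) order.refl mw'] obtain a' b' where
          r: "A = {a', hd ?gs}" "B = {last ?gs, b'}" "Cfs (a' # ?gs @ [b'])" by blast
        have "?gs!0 \<in> set ?gs" by (rule nth_mem) simp
        then have "?gs!0 \<noteq> e3" using n3 by metis
        then have nS1': "\<not> (a' = e1 \<and> ?gs!0 = e3 \<and> 2 \<le> length ?gs \<and> ?gs!1 = e2)" by blast
        have "?gs!(length ?gs - 1) = e1" by (simp add: nth_append)
        then have nS2': "\<not> (b' = e1 \<and> ?gs!(length ?gs - 1) = e3 \<and> 2 \<le> length ?gs \<and> ?gs!(length ?gs - 2) = e2)" using d12 by simp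
        show ?thesis using tri_fs[OF tri inj mw' r nS1' nS2'] .
      next
        case False
        show ?thesis using tri_fs[OF tri inj g(1) g(2) g(3) g(4) nS1 False] .
      qed
    qed
  qed
  then have "rc (A1,E2) \<le> card N - 1" using rc_le[OF bound] by simp
  moreover have "0 < card N" using e3N finN card_gt_0_iff by blast
  ultimately show ?thesis by linarith
qed

end

lemma pe_walk:
  assumes x: "x \<in> set (path_edges xs)" and y: "y \<in> set (path_edges xs)"
  shows "\<exists>ws. walk (set (path_edges xs)) {x} {y} ws"
proof -
  let ?p = "path_edges xs"
  from x obtain i where i: "i < length ?p" "?p!i = x" by (auto simp: in_set_conv_nth)
  from y obtain j where j: "j < length ?p" "?p!j = y" by (auto simp: in_set_conv_nth)
  have sp: "successively (\<lambda>e f. e \<inter> f \<noteq> {}) ?p" by (rule pe_meet)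
  have gen: "\<exists>ws. ws \<noteq> [] \<and> set ws \<subseteq> set ?p \<and> successively (\<lambda>e f. e \<inter> f \<noteq> {}) ws \<and> hd ws = ?p!a \<and> last ws = ?p!b"
    if ab: "a \<le> b" "b < length ?p" for a b
  proof -
    let ?w = "drop a (take (Suc b) ?p)"
    have l: "length ?w = Suc b - a" using ab by simp
    have ne: "?w \<noteq> []" using ab by simp
    have "hd ?w = ?p!a" using ab by (simp add: hd_drop_conv_nth)
    moreover have "last ?w = last (take (Suc b) ?p)" using ab by (intro last_drop) simp
    moreover have "last (take (Suc b) ?p) = ?p!b" using ab by (intro last_take_Suc)
    moreover note calculation
    moreover have "successively (\<lambda>e f. e \<inter> f \<noteq> {}) ?w" using succ_drop[OF succ_take[OF sp]] .
    moreover have "set ?w \<subseteq> set ?p" by (meson order.trans set_drop_subset set_take_subset)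
    ultimately show ?thesis using ne by metis
  qed
  show ?thesis
  proof (cases "i \<le> j")
    case True
    from gen[OF True j(1)] obtain ws where "ws \<noteq> [] \<and> set ws \<subseteq> set ?p \<and> successively (\<lambda>e f. e \<inter> f \<noteq> {}) ws \<and> hd ws = ?p!i \<and> last ws = ?p!j" by blast
    then show ?thesis using i j by (intro exI[of _ ws]) (auto simp: walk_def)
  next
    case False
    then have "j \<le> i" by simp
    from gen[OF this i(1)] obtain ws where ws: "ws \<noteq> []" "set ws \<subseteq> set ?p" "successively (\<lambda>e f. e \<inter> f \<noteq> {}) ws" "hd ws = ?p!j" "last ws = ?p!i" by blast
    have "successively (\<lambda>e f. e \<inter> f \<noteq> {}) (rev ws)"
      using ws(3) by (simp add: successively_rev) (erule successively_mono, auto)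
    moreover have "hd (rev ws) = ?p!i" "last (rev ws) = ?p!j" using ws by (auto simp: hd_rev last_rev)
    ultimately show ?thesis using ws i j by (intro exI[of _ "rev ws"]) (auto simp: walk_def)
  qed
qed

context sg
begin

lemma cut_bound:
  assumes conn: "\<And>x y. x \<in> E - {e} \<Longrightarrow> y \<in> E - {e} \<Longrightarrow> \<exists>ws. walk (E - {e}) {x} {y} ws"
    and eN: "e \<in> N" and e'N: "e' \<in> N" "e' \<noteq> e"
  shows "rc (A1,E2) < card N"
proof -
  have fin': "finite (N - {e})" using finN by simp
  obtain idx where idx: "bij_betw idx (N - {e}) {0..<card (N - {e})}" using ex_bij_betw_finite_nat[OF fin'] by blast
  have cN: "card (N - {e}) = card N - 1" using eN finN by simp
  have inj: "inj_on idx (N - {e})" using idx by (simp add: bij_betw_def)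
  have lt: "idx x < card N - 1" if "x \<in> N - {e}" for x using idx that cN by (auto simp: bij_betw_def)
  let ?col = "\<lambda>X f. idx (if f = e then e' else f)"
  let ?c = "\<lambda>\<epsilon>. ?col (\<Union>\<epsilon>) (the_elem (\<Inter>\<epsilon>))"
  have bound: "\<forall>\<epsilon>\<in>snd (A1,E2). ?c \<epsilon> < card N - 1"
  proof
    fix \<epsilon> assume "\<epsilon> \<in> snd (A1,E2)"
    then obtain f where f: "\<Inter>\<epsilon> = {f}" "f \<in> N" using E2_color[of \<epsilon>] by auto
    show "?c \<epsilon> < card N - 1"
      using f lt[of e'] lt[of f] e'N by auto
  qed
  have "rainbow_connected (A1, E2) ?c"
  proof (rule rainbow_scheme)
    fix A B assume AB: "A \<in> A1" "B \<in> A1" "A \<noteq> B"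
    have ex: "\<exists>x. x \<in> C \<inter> (E - {e})" if "C \<in> A1" for C
    proof -
      from that obtain p q where "C = {p,q}" "adj p q" by (auto simp: A1_def)
      then show ?thesis by (auto simp: adj_def)
    qed
    obtain x where x: "x \<in> A \<inter> (E - {e})" using ex[OF AB(1)] by blast
    obtain y where y: "y \<in> B \<inter> (E - {e})" using ex[OF AB(2)] by blast
    from good_fs[OF conn _ AB x y] obtain gs a b where
      g: "minwalk (E - {e}) A B gs" "A = {a, hd gs}" "B = {last gs, b}" "Cfs (a # gs @ [b])" by blast
    have ne: "gs \<noteq> []" and gW: "set gs \<subseteq> E - {e}" using g(1) by (auto simp: minwalk_def walk_def)
    have dg: "distinct gs" using minwalk_props(1)[OF g(1)] .
    let ?fs = "a # gs @ [b]"
    note fi = fs_idx[OF ne, where a=a and b=b]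
    show "\<exists>fs. Cfs fs \<and> {fs!0, fs!1} = A \<and> {fs!(length fs - 2), fs!(length fs - 1)} = B \<and>
      (\<forall>i j. i < j \<longrightarrow> Suc (Suc j) < length fs \<longrightarrow>
         ?col {fs!i, fs!Suc i, fs!Suc (Suc i)} (fs!Suc i) \<noteq> ?col {fs!j, fs!Suc j, fs!Suc (Suc j)} (fs!Suc j))"
    proof (intro exI[of _ ?fs] conjI allI impI)
      show "Cfs ?fs" by (rule g(4))
      show "{?fs!0, ?fs!1} = A" using fi g(2) by simp
      show "{?fs!(length ?fs - 2), ?fs!(length ?fs - 1)} = B" using fi g(3) by simp
      fix i j assume ij: "i < j" "Suc (Suc j) < length ?fs"
      have i': "Suc (Suc i) < length ?fs" using ij by simp
      have N1: "?fs!Suc i \<in> N" using Cfs_N[OF g(4) i'] .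
      have N2: "?fs!Suc j \<in> N" using Cfs_N[OF g(4) ij(2)] .
      have gi: "?fs!Suc i = gs!i" "?fs!Suc j = gs!j" using fi ij by auto
      have "gs!i \<in> set gs" "gs!j \<in> set gs" using ij fi by auto
      then have ne3: "gs!i \<noteq> e" "gs!j \<noteq> e" using gW by auto
      have "gs!i \<noteq> gs!j" using dg ij fi by (simp add: nth_eq_iff_index_eq)
      then have "idx (gs!i) \<noteq> idx (gs!j)" using inj N1 N2 gi ne3 by (auto simp: inj_on_def)
      then show "?col {?fs!i, ?fs!Suc i, ?fs!Suc (Suc i)} (?fs!Suc i) \<noteq>
          ?col {?fs!j, ?fs!Suc j, ?fs!Suc (Suc j)} (?fs!Suc j)"
        using gi ne3 by simp
    qed
  qed
  then have "rc (A1,E2) \<le> card N - 1" using rc_le[OF bound] by simp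
  moreover have "0 < card N" using eN finN card_gt_0_iff by blast
  ultimately show ?thesis by linarith
qed

end

context sg
begin

lemma deg2_edges:
  assumes d: "degree (V,E) u \<le> 2" and es: "e \<in> E" "f \<in> E" "g \<in> E" and u: "u \<in> e" "u \<in> f" "u \<in> g"
    and ef: "e \<noteq> f"
  shows "g = e \<or> g = f"
proof (rule ccontr)
  assume "\<not> (g = e \<or> g = f)"
  then have "g \<noteq> e" "g \<noteq> f" by auto
  then have "card {e,f,g} = 3" using ef by simp
  moreover have "{e,f,g} \<subseteq> {h\<in>E. u \<in> h}" using es u by auto
  ultimately have "3 \<le> card {h\<in>E. u \<in> h}" using finE by (metis (no_types, lifting) card_mono finite_subset mem_Collect_eq subsetI)
  then show False using d by (simp add: degree_def)
qed

lemma gp_edge: "is_gpath (V,E) xs \<Longrightarrow> Suc i < length xs \<Longrightarrow> {xs!i, xs!Suc i} \<in> E"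
  by (simp add: is_gpath_def)

lemma edge_in_V: "{a,b} \<in> E \<Longrightarrow> a \<in> V \<and> b \<in> V"
  using E_Pow by auto

lemma longest_exists:
  assumes "E \<noteq> {}"
  shows "\<exists>xs. is_gpath (V,E) xs \<and> 2 \<le> length xs \<and> (\<forall>ys. is_gpath (V,E) ys \<longrightarrow> length ys \<le> length xs)"
proof -
  obtain e where e: "e \<in> E" using assms by blast
  then obtain u v where uv: "e = {u,v}" "u \<noteq> v" "u \<in> V" "v \<in> V" by (auto elim: edgeE)
  have g0: "is_gpath (V,E) [u,v]" using uv e by (simp add: is_gpath_iff)
  have bd: "\<forall>ys. is_gpath (V,E) ys \<longrightarrow> length ys < Suc (card V)"
  proof (intro allI impI)
    fix ys assume "is_gpath (V,E) ys"
    then have "distinct ys" "set ys \<subseteq> V" by (auto simp: is_gpath_iff)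
    then have "length ys \<le> card V" using card_mono[OF finV] distinct_card by metis
    then show "length ys < Suc (card V)" by simp
  qed
  from Lattices_Big.ex_has_greatest_nat[of "is_gpath (V,E)" "[u,v]" length "Suc (card V)", OF g0 bd]
  obtain xs where xs: "is_gpath (V,E) xs" "\<forall>ys. is_gpath (V,E) ys \<longrightarrow> length ys \<le> length xs" by blast
  have "2 \<le> length xs" using xs(2) g0 by fastforce
  then show ?thesis using xs by blast
qed

lemma pe_mem: "Suc j < length xs \<Longrightarrow> {xs!j, xs!Suc j} \<in> set (path_edges xs)"
proof -
  assume a: "Suc j < length xs"
  then have "path_edges xs ! j \<in> set (path_edges xs)" by (intro nth_mem) simp
  then show ?thesis using a by (simp add: nth_path_edges)
qed

lemma dneq: "distinct xs \<Longrightarrow> i < length xs \<Longrightarrow> j < length xs \<Longrightarrow> i \<noteq> j \<Longrightarrow> xs!i \<noteq> xs!j"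
  by (simp add: nth_eq_iff_index_eq)

lemma interior_edges:
  assumes deg: "\<forall>v\<in>V. degree (V,E) v \<le> 2" and gp: "is_gpath (V,E) xs"
    and j: "0 < j" "Suc j < length xs" and h: "h \<in> E" "xs!j \<in> h"
  shows "h = {xs!(j-1), xs!j} \<or> h = {xs!j, xs!Suc j}"
proof -
  have dx: "distinct xs" and sx: "set xs \<subseteq> V" using gp by (auto simp: is_gpath_iff)
  have e1: "{xs!(j-1), xs!j} \<in> E" using gp_edge[OF gp, of "j-1"] j by simp
  have e2: "{xs!j, xs!Suc j} \<in> E" using gp_edge[OF gp, of j] j by simp
  have "xs!(j-1) \<noteq> xs!Suc j" using dx j by (simp add: nth_eq_iff_index_eq)
  then have ne: "{xs!(j-1), xs!j} \<noteq> {xs!j, xs!Suc j}" using dx j by (auto simp: doubleton_eq_iff)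
  have "xs!j \<in> V" using sx j by auto
  then have "degree (V,E) (xs!j) \<le> 2" using deg by blast
  from deg2_edges[OF this e1 e2 h(1) _ _ h(2) ne] show ?thesis by simp
qed

lemma at_F:
  assumes deg: "\<forall>v\<in>V. degree (V,E) v \<le> 2" and gp: "is_gpath (V,E) xs" and l2: "2 \<le> length xs"
    and mx: "\<forall>ys. is_gpath (V,E) ys \<longrightarrow> length ys \<le> length xs"
    and i: "i < length xs" and g: "g \<in> E" "xs!i \<in> g"
  shows "g \<in> insert {xs!(length xs - 1), xs!0} (set (path_edges xs))"
proof -
  let ?n = "length xs"
  have dx: "distinct xs" and sx: "set xs \<subseteq> V" and ne: "xs \<noteq> []"
    and sc: "successively (\<lambda>u v. {u,v} \<in> E) xs" using gp by (auto simp: is_gpath_iff)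
  obtain w where gw: "g = {xs!i, w}" "w \<noteq> xs!i"
  proof -
    from g(1) obtain u v where "g = {u,v}" "u \<noteq> v" by (auto elim: edgeE)
    then show ?thesis using that g(2) by (auto simp: insert_commute)
  qed
  have wV: "w \<in> V" using edge_in_V[of "xs!i" w] g(1) gw(1) by simp
  consider "0 < i" "Suc i < ?n" | "i = 0" | "Suc i = ?n" "i \<noteq> 0" using i by arith
  then show ?thesis
  proof cases
    case 1
    from interior_edges[OF deg gp 1 g] show ?thesis
      using pe_mem[of "i-1" xs] pe_mem[of i xs] 1 by auto
  next
    case 2
    have "w \<in> set xs"
    proof (rule ccontr)
      assume wn: "w \<notin> set xs"
      have "{w, hd xs} \<in> E" using g(1) gw 2 ne by (simp add: hd_conv_nth insert_commute)
      then have "is_gpath (V,E) (w # xs)" using wn wV sx dx sc ne by (auto simp: is_gpath_iff successively_Cons)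
      then show False using mx by fastforce
    qed
    then obtain j where j: "j < ?n" "xs!j = w" by (auto simp: in_set_conv_nth)
    have j0: "j \<noteq> 0"
    proof
      assume "j = 0" then show False using j gw 2 by simp
    qed
    consider "j = 1" | "j = ?n - 1" | "1 < j" "Suc j < ?n" using j j0 by arith
    then show ?thesis
    proof cases
      case 1 then show ?thesis using pe_mem[of 0 xs] l2 gw 2 j by auto
    next
      case 2 then show ?thesis using gw \<open>i = 0\<close> j by (auto simp: insert_commute)
    next
      case 3
      have "g \<in> E" "xs!j \<in> g" using g gw j by auto
      from interior_edges[OF deg gp _ 3(2) this] 3 have "g = {xs!(j-1), xs!j} \<or> g = {xs!j, xs!Suc j}" by simp
      moreover have "xs!0 \<noteq> xs!(j-1)" by (rule dneq[OF dx]) (use 3 in arith)+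
      moreover have "xs!0 \<noteq> xs!Suc j" by (rule dneq[OF dx]) (use 3 in arith)+
      moreover have "xs!0 \<noteq> xs!j" by (rule dneq[OF dx]) (use 3 in arith)+
      ultimately show ?thesis using gw \<open>i = 0\<close> j by (auto simp: doubleton_eq_iff)
    qed
  next
    case 3
    have il: "i = ?n - 1" using 3 by arith
    have "w \<in> set xs"
    proof (rule ccontr)
      assume wn: "w \<notin> set xs"
      have "{last xs, w} \<in> E" using g(1) gw il ne by (simp add: last_conv_nth)
      then have "is_gpath (V,E) (xs @ [w])" using wn wV sx dx sc ne
        by (auto simp: is_gpath_iff successively_append_iff)
      then show False using mx by fastforce
    qed
    then obtain j where j: "j < ?n" "xs!j = w" by (auto simp: in_set_conv_nth)
    have ji: "j \<noteq> i" using j gw by auto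
    consider "Suc j = i" | "j = 0" | "0 < j" "Suc (Suc j) < ?n" using j ji il by arith
    then show ?thesis
    proof cases
      case 1 then show ?thesis using pe_mem[of j xs] gw j il 3 by (auto simp: insert_commute)
    next
      case 2 then show ?thesis using gw il j by auto
    next
      case c: 3
      have "g \<in> E" "xs!j \<in> g" using g gw j by auto
      from interior_edges[OF deg gp c(1) _ this] c have "g = {xs!(j-1), xs!j} \<or> g = {xs!j, xs!Suc j}" by simp
      moreover have "xs!i \<noteq> xs!(j-1)" by (rule dneq[OF dx]) (use c il 3 in arith)+
      moreover have "xs!i \<noteq> xs!Suc j" by (rule dneq[OF dx]) (use c il 3 in arith)+
      moreover have "xs!i \<noteq> xs!j" by (rule dneq[OF dx]) (use c il 3 in arith)+
      ultimately show ?thesis using gw j by (auto simp: doubleton_eq_iff)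
    qed
  qed
qed

lemma max2_structure:
  assumes conn: "connected_graph (V,E)" and En: "E \<noteq> {}" and deg: "\<forall>v\<in>V. degree (V,E) v \<le> 2"
  shows "\<exists>xs. is_gpath (V,E) xs \<and> set xs = V \<and> 2 \<le> length xs \<and>
    (E = set (path_edges xs) \<or> (3 \<le> length xs \<and> {xs!(length xs - 1), xs!0} \<notin> set (path_edges xs) \<and>
       E = insert {xs!(length xs - 1), xs!0} (set (path_edges xs))))"
proof -
  obtain xs where gp: "is_gpath (V,E) xs" and l2: "2 \<le> length xs"
    and mx: "\<forall>ys. is_gpath (V,E) ys \<longrightarrow> length ys \<le> length xs" using longest_exists[OF En] by blast
  let ?n = "length xs"
  let ?F = "insert {xs!(?n - 1), xs!0} (set (path_edges xs))"
  have dx: "distinct xs" and sx: "set xs \<subseteq> V" and ne: "xs \<noteq> []"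
    and sc: "successively (\<lambda>u v. {u,v} \<in> E) xs" using gp by (auto simp: is_gpath_iff)
  have UF: "g \<subseteq> set xs" if "g \<in> ?F" for g
  proof -
    have "xs!(?n - 1) \<in> set xs" "xs!0 \<in> set xs" using ne by simp_all
    moreover have "h \<subseteq> set xs" if "h \<in> set (path_edges xs)" for h
    proof -
      from that obtain j where "j < ?n - 1" "h = path_edges xs ! j" by (auto simp: in_set_conv_nth)
      then show ?thesis by (simp add: nth_path_edges)
    qed
    ultimately show ?thesis using that by auto
  qed
  have Vx: "V = set xs"
  proof
    show "set xs \<subseteq> V" by (rule sx)
    show "V \<subseteq> set xs"
    proof
      fix u assume u: "u \<in> V"
      have x0: "xs!0 \<in> V" using sx ne by auto
      have "\<exists>ys. is_gpath (V,E) ys \<and> hd ys = xs!0 \<and> last ys = u"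
        using conn u x0 unfolding connected_graph_def by simp
      then obtain ys where ys: "is_gpath (V,E) ys" "hd ys = xs!0" "last ys = u" by blast
      have yne: "ys \<noteq> []" using ys by (simp add: is_gpath_iff)
      have "ys!k \<in> set xs" if "k < length ys" for k
        using that
      proof (induction k)
        case 0 then show ?case using ys(2) yne ne by (simp add: hd_conv_nth)
      next
        case (Suc k)
        then have "ys!k \<in> set xs" by simp
        then obtain i where i: "i < ?n" "xs!i = ys!k" by (auto simp: in_set_conv_nth)
        have g: "{ys!k, ys!Suc k} \<in> E" using gp_edge[OF ys(1) Suc.prems] .
        have "{ys!k, ys!Suc k} \<in> ?F" using at_F[OF deg gp l2 mx i(1) g] i by simp
        then show ?case using UF by blast
      qed
      then have "ys!(length ys - 1) \<in> set xs" using yne by simp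
      then show "u \<in> set xs" using ys(3) yne by (simp add: last_conv_nth)
    qed
  qed
  have EF: "E \<subseteq> ?F"
  proof
    fix g assume g: "g \<in> E"
    then obtain u where u: "u \<in> g" "u \<in> V" by (auto elim: edgeE)
    then obtain i where "i < ?n" "xs!i = u" using Vx by (auto simp: in_set_conv_nth)
    then show "g \<in> ?F" using at_F[OF deg gp l2 mx _ g] u by blast
  qed
  have pE: "set (path_edges xs) \<subseteq> E" using pe_subset[OF sc] .
  show ?thesis
  proof (cases "{xs!(?n - 1), xs!0} \<in> E \<and> {xs!(?n - 1), xs!0} \<notin> set (path_edges xs)")
    case True
    have "E = ?F" using EF pE True by blast
    moreover have "3 \<le> ?n"
    proof (rule ccontr)
      assume "\<not> 3 \<le> ?n"
      then have n2: "?n = 2" using l2 by arith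
      have "{xs!0, xs!Suc 0} \<in> set (path_edges xs)" using pe_mem[of 0 xs] n2 by simp
      then show False using True n2 by (simp add: insert_commute)
    qed
    ultimately show ?thesis using gp Vx l2 True by blast
  next
    case False
    have "E \<subseteq> set (path_edges xs)" using EF False by blast
    then have "E = set (path_edges xs)" using pE by blast
    then show ?thesis using gp Vx l2 by blast
  qed
qed

end

lemma pe_distinct: assumes "distinct xs" shows "distinct (path_edges xs)"
  unfolding distinct_conv_nth
proof (intro allI impI)
  fix i j assume i: "i < length (path_edges xs)" and j: "j < length (path_edges xs)" and ij: "i \<noteq> j"
  show "path_edges xs ! i \<noteq> path_edges xs ! j"
  proof
    assume "path_edges xs ! i = path_edges xs ! j"
    then have "{xs!i, xs!Suc i} = {xs!j, xs!Suc j}" using i j by (simp add: nth_path_edges)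
    then have "(xs!i = xs!j \<and> xs!Suc i = xs!Suc j) \<or> (xs!i = xs!Suc j \<and> xs!Suc i = xs!j)"
      by (simp add: doubleton_eq_iff)
    then show False using assms i j ij by (auto simp: nth_eq_iff_index_eq)
  qed
qed

lemma at_vertex:
  assumes "distinct xs" "i < length xs - 1" "j < length xs"
  shows "xs!j \<in> path_edges xs ! i \<longleftrightarrow> i = j \<or> Suc i = j"
  using assms by (auto simp: nth_path_edges nth_eq_iff_index_eq)

lemma pe_meet_idx:
  assumes d: "distinct xs" and ab: "a < b" "b < length xs - 1" and m: "path_edges xs ! a \<inter> path_edges xs ! b \<noteq> {}"
  shows "b = Suc a"
proof -
  from m obtain u where u: "u \<in> path_edges xs ! a" "u \<in> path_edges xs ! b" by blast
  have "u = xs!a \<or> u = xs!Suc a" "u = xs!b \<or> u = xs!Suc b" using u ab by (auto simp: nth_path_edges)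
  then show ?thesis using d ab by (auto simp: nth_eq_iff_index_eq)
qed

context sg
begin

lemma cycle_bound:
  assumes gp: "is_gpath (V,E) xs" and l: "3 \<le> length xs"
    and en: "{xs!(length xs - 1), xs!0} \<notin> set (path_edges xs)"
    and Eq: "E = insert {xs!(length xs - 1), xs!0} (set (path_edges xs))"
  shows "rc (A1,E2) < card N"
proof -
  let ?n = "length xs"
  let ?e = "{xs!(?n - 1), xs!0}"
  let ?p = "path_edges xs"
  have dx: "distinct xs" using gp by (simp add: is_gpath_iff)
  have W: "E - {?e} = set ?p" using Eq en by auto
  have conn: "\<exists>ws. walk (E - {?e}) {x} {y} ws" if "x \<in> E - {?e}" "y \<in> E - {?e}" for x y
    using pe_walk[of x xs y] that unfolding W by simp
  have p0: "?p!0 = {xs!0, xs!1}" and p1: "?p!1 = {xs!1, xs!2}" and pl: "?p!(?n - 2) = {xs!(?n - 2), xs!(?n - 1)}"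
    using l by (simp_all add: nth_path_edges numeral_2_eq_2 Suc_diff_Suc)
  have inp: "?p!0 \<in> set ?p" "?p!1 \<in> set ?p" "?p!(?n - 2) \<in> set ?p" using l by (auto intro!: nth_mem)
  have inE: "?p!0 \<in> E" "?p!1 \<in> E" "?p!(?n - 2) \<in> E" "?e \<in> E" using inp Eq by auto
  have ne0: "?p!0 \<noteq> ?e" "?p!1 \<noteq> ?e" "?p!(?n-2) \<noteq> ?e" using inp en by auto
  have x0: "xs!0 \<noteq> xs!(?n - 2)" "xs!0 \<noteq> xs!(?n - 1)" "xs!0 \<noteq> xs!1" "xs!0 \<noteq> xs!2"
    by (rule dneq[OF dx]; use l in arith)+
  have a1: "adj (?p!0) ?e" using inE ne0 p0 by (auto simp: adj_def)
  have a2: "adj ?e (?p!(?n - 2))" using inE ne0 pl by (auto simp: adj_def)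
  have d1: "?p!0 \<noteq> ?p!(?n - 2)" using p0 pl x0 by (auto simp: doubleton_eq_iff)
  have eN: "?e \<in> N" using N_mem[OF a1 a2 d1] .
  have a3: "adj ?e (?p!0)" using adj_sym[OF a1] .
  have a4: "adj (?p!0) (?p!1)" using inE p0 p1 x0 by (auto simp: adj_def doubleton_eq_iff)
  have e'N: "?p!0 \<in> N" using N_mem[OF a3 a4 ne0(2)[symmetric]] .
  show ?thesis using cut_bound[OF conn eN e'N ne0(1)] by simp
qed

lemma path_facts:
  assumes gp: "is_gpath (V,E) xs" and Vx: "set xs = V" and Eq: "set (path_edges xs) = E" and l: "4 \<le> length xs"
  shows "card E = length xs - 1" "2 \<le> card (pendent_2paths (V,E))" "length xs - 3 \<le> rc (A1,E2)"
proof -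
  let ?n = "length xs"
  let ?p = "path_edges xs"
  have dx: "distinct xs" using gp by (simp add: is_gpath_iff)
  have dp: "distinct ?p" using pe_distinct[OF dx] .
  have nel: "xs \<noteq> []" "0 < ?n" "1 < ?n" "?n - 1 < ?n" "?n - 2 < ?n" using l by auto
  show "card E = ?n - 1" using distinct_card[OF dp] Eq by simp
  have at: "{e\<in>E. xs!j \<in> e} = {?p!i | i. i < ?n - 1 \<and> (i = j \<or> Suc i = j)}" if j: "j < ?n" for j
  proof -
    have "{e\<in>E. xs!j \<in> e} = {e \<in> set ?p. xs!j \<in> e}" using Eq by simp
    also have "\<dots> = {?p!i | i. i < ?n - 1 \<and> xs!j \<in> ?p!i}" by (auto simp: in_set_conv_nth)
    also have "\<dots> = {?p!i | i. i < ?n - 1 \<and> (i = j \<or> Suc i = j)}" using at_vertex[OF dx _ j] by metis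
    finally show ?thesis .
  qed
  have deg1: "degree (V,E) (xs!0) = 1"
  proof -
    have "{?p!i | i. i < ?n - 1 \<and> (i = 0 \<or> Suc i = 0)} = {?p!0}" using l by auto
    then have "{e\<in>E. xs!0 \<in> e} = {?p!0}" using at[of 0] nel by simp
    then show ?thesis by (simp add: degree_def)
  qed
  have deg2: "degree (V,E) (xs!1) = 2"
  proof -
    have "{?p!i | i. i < ?n - 1 \<and> (i = 1 \<or> Suc i = 1)} = {?p!0, ?p!1}" using l by auto
    then have "{e\<in>E. xs!1 \<in> e} = {?p!0, ?p!1}" using at[of 1] nel by simp
    moreover have "?p!0 \<noteq> ?p!1" using dp l by (simp add: nth_eq_iff_index_eq)
    ultimately show ?thesis by (simp add: degree_def)
  qed
  have deg1': "degree (V,E) (xs!(?n - 1)) = 1"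
  proof -
    have c: "\<And>i. (i < ?n - 1 \<and> (i = ?n - 1 \<or> Suc i = ?n - 1)) \<longleftrightarrow> i = ?n - 2" using l by arith
    have "{?p!i | i. i < ?n - 1 \<and> (i = ?n - 1 \<or> Suc i = ?n - 1)} = {?p!(?n - 2)}" unfolding c by blast
    then have "{e\<in>E. xs!(?n - 1) \<in> e} = {?p!(?n - 2)}" using at[of "?n - 1"] nel by simp
    then show ?thesis by (simp add: degree_def)
  qed
  have deg2': "degree (V,E) (xs!(?n - 2)) = 2"
  proof -
    have c: "\<And>i. (i < ?n - 1 \<and> (i = ?n - 2 \<or> Suc i = ?n - 2)) \<longleftrightarrow> (i = ?n - 3 \<or> i = ?n - 2)" using l by arith
    have "{?p!i | i. i < ?n - 1 \<and> (i = ?n - 2 \<or> Suc i = ?n - 2)} = {?p!(?n - 3), ?p!(?n - 2)}" unfolding c by blast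
    then have "{e\<in>E. xs!(?n - 2) \<in> e} = {?p!(?n - 3), ?p!(?n - 2)}" using at[of "?n - 2"] nel by simp
    moreover have "?p!(?n - 3) \<noteq> ?p!(?n - 2)" using dp l by (simp add: nth_eq_iff_index_eq)
    ultimately show ?thesis by (simp add: degree_def)
  qed
  have inV: "xs!k \<in> V" if "k < ?n" for k using that Vx by auto
  have P1: "set (path_edges [xs!0, xs!1, xs!2]) \<in> pendent_2paths (V,E)"
  proof -
    have "is_gpath (V,E) [xs!0, xs!1, xs!2]"
    proof -
      have "xs!0 \<noteq> xs!1" "xs!0 \<noteq> xs!2" "xs!1 \<noteq> xs!2" by (rule dneq[OF dx]; use l in arith)+
      moreover have "{xs!0, xs!1} \<in> E" "{xs!1, xs!2} \<in> E" using gp_edge[OF gp, of 0] gp_edge[OF gp, of 1] l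
        by (simp_all add: numeral_2_eq_2)
      moreover have "xs!0 \<in> V" "xs!1 \<in> V" "xs!2 \<in> V" using inV[of 0] inV[of 1] inV[of 2] l nel by auto
      ultimately show ?thesis by (simp add: is_gpath_iff)
    qed
    then show ?thesis unfolding pendent_2paths_def using deg1 deg2 by fastforce
  qed
  have P2: "set (path_edges [xs!(?n-1), xs!(?n-2), xs!(?n-3)]) \<in> pendent_2paths (V,E)"
  proof -
    have "is_gpath (V,E) [xs!(?n-1), xs!(?n-2), xs!(?n-3)]"
    proof -
      have "xs!(?n-1) \<noteq> xs!(?n-2)" "xs!(?n-1) \<noteq> xs!(?n-3)" "xs!(?n-2) \<noteq> xs!(?n-3)" by (rule dneq[OF dx]; use l in arith)+
      moreover have "{xs!(?n-2), xs!Suc (?n-2)} \<in> E" "{xs!(?n-3), xs!Suc (?n-3)} \<in> E"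
        using gp_edge[OF gp, of "?n-2"] gp_edge[OF gp, of "?n-3"] l by simp_all
      moreover have "Suc (?n-2) = ?n - 1" "Suc (?n-3) = ?n - 2" using l by arith+
      moreover have "xs!(?n-1) \<in> V" "xs!(?n-2) \<in> V" "xs!(?n-3) \<in> V" using inV[of "?n-1"] inV[of "?n-2"] inV[of "?n-3"] l nel by auto
      ultimately show ?thesis by (simp add: is_gpath_iff insert_commute)
    qed
    then show ?thesis unfolding pendent_2paths_def using deg1' deg2' by fastforce
  qed
  have P12: "set (path_edges [xs!0, xs!1, xs!2]) \<noteq> set (path_edges [xs!(?n-1), xs!(?n-2), xs!(?n-3)])"
  proof -
    have "xs!0 \<noteq> xs!(?n-1)" "xs!0 \<noteq> xs!(?n-2)" "xs!0 \<noteq> xs!(?n-3)" "xs!1 \<noteq> xs!(?n-1)" by (rule dneq[OF dx]; use l in arith)+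
    then have "{xs!0, xs!1} \<notin> set (path_edges [xs!(?n-1), xs!(?n-2), xs!(?n-3)])"
      by (auto simp: doubleton_eq_iff)
    moreover have "{xs!0, xs!1} \<in> set (path_edges [xs!0, xs!1, xs!2])" by simp
    ultimately show ?thesis by metis
  qed
  have finP: "finite (pendent_2paths (V,E))"
  proof (rule finite_subset[of _ "Pow E"])
    show "pendent_2paths (V,E) \<subseteq> Pow E"
      unfolding pendent_2paths_def using pe_subset by (fastforce simp: is_gpath_iff)
    show "finite (Pow E)" using finE by simp
  qed
  have "card {set (path_edges [xs!0, xs!1, xs!2]), set (path_edges [xs!(?n-1), xs!(?n-2), xs!(?n-3)])} = 2"
    using P12 by simp
  then show "2 \<le> card (pendent_2paths (V,E))"
    using card_mono[OF finP, of "{set (path_edges [xs!0, xs!1, xs!2]), set (path_edges [xs!(?n-1), xs!(?n-2), xs!(?n-3)])}"] P1 P2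
    by simp
  define \<alpha> where "\<alpha> i = {?p!i, ?p!Suc i}" for i
  have \<alpha>A: "\<alpha> i \<in> A1" if "Suc i < ?n - 1" for i
  proof -
    have "?p!i \<in> E" "?p!Suc i \<in> E" using that Eq by (auto intro!: nth_mem)
    moreover have "?p!i \<noteq> ?p!Suc i" using dp that by (simp add: nth_eq_iff_index_eq)
    moreover have "xs!Suc i \<in> ?p!i \<inter> ?p!Suc i" using that by (simp add: nth_path_edges)
    ultimately have "adj (?p!i) (?p!Suc i)" by (auto simp: adj_def)
    then show ?thesis unfolding A1_def \<alpha>_def by blast
  qed
  have \<alpha>inj: "i = j" if "Suc i < ?n - 1" "Suc j < ?n - 1" "\<alpha> i = \<alpha> j" for i j
  proof -
    have "(?p!i = ?p!j \<and> ?p!Suc i = ?p!Suc j) \<or> (?p!i = ?p!Suc j \<and> ?p!Suc i = ?p!j)"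
      using that(3) by (simp add: \<alpha>_def doubleton_eq_iff)
    then show ?thesis using dp that by (auto simp: nth_eq_iff_index_eq)
  qed
  have A1s: "\<exists>i. Suc i < ?n - 1 \<and> \<beta> = \<alpha> i" if "\<beta> \<in> A1" for \<beta>
  proof -
    from that obtain e f where ef: "\<beta> = {e,f}" "adj e f" by (auto simp: A1_def)
    then have "e \<in> set ?p" "f \<in> set ?p" using Eq by (auto simp: adj_def)
    then obtain a b where ab: "a < ?n - 1" "?p!a = e" "b < ?n - 1" "?p!b = f" by (auto simp: in_set_conv_nth)
    have m: "?p!a \<inter> ?p!b \<noteq> {}" "a \<noteq> b" using ef ab by (auto simp: adj_def)
    show ?thesis
    proof (cases "a < b")
      case True
      have "b = Suc a" using pe_meet_idx[OF dx True ab(3) m(1)] .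
      then show ?thesis using ab ef by (auto simp: \<alpha>_def)
    next
      case False
      then have "b < a" using m by simp
      moreover have "?p!b \<inter> ?p!a \<noteq> {}" using m by (simp add: Int_commute)
      ultimately have "a = Suc b" using pe_meet_idx[OF dx _ ab(1)] by blast
      then show ?thesis using ab ef by (auto simp: \<alpha>_def insert_commute)
    qed
  qed
  have E2int: "\<beta> \<inter> \<gamma> \<noteq> {}" if "{\<beta>,\<gamma>} \<in> E2" for \<beta> \<gamma>
  proof -
    from that obtain x y where "{\<beta>,\<gamma>} = {x,y}" "x \<inter> y \<noteq> {}" by (auto simp: E2_def)
    then show ?thesis by (auto simp: doubleton_eq_iff Int_commute)
  qed
  have step: "j \<le> Suc i" if "Suc i < ?n - 1" "Suc j < ?n - 1" "\<alpha> i \<inter> \<alpha> j \<noteq> {}" for i j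
  proof (rule ccontr)
    assume "\<not> j \<le> Suc i"
    then have "?p!i \<noteq> ?p!j" "?p!i \<noteq> ?p!Suc j" "?p!Suc i \<noteq> ?p!j" "?p!Suc i \<noteq> ?p!Suc j"
      using dp that by (auto simp: nth_eq_iff_index_eq)
    then show False using that(3) by (auto simp: \<alpha>_def)
  qed
  obtain c where c: "\<forall>\<epsilon>\<in>E2. c \<epsilon> < rc (A1,E2)" "rainbow_connected (A1,E2) c"
  proof -
    have "connected_graph (V,E)"
    proof -
      have "\<exists>ys. is_gpath (V,E) ys \<and> hd ys = u \<and> last ys = v" if uv: "u \<in> V" "v \<in> V" for u v
      proof -
        have "u \<in> set xs" "v \<in> set xs" using uv Vx by auto
        then obtain a b where ab: "a < ?n" "xs!a = u" "b < ?n" "xs!b = v" by (auto simp: in_set_conv_nth)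
        show ?thesis
        proof (cases "a \<le> b")
          case True
          let ?ys = "drop a (take (Suc b) xs)"
          have "is_gpath (V,E) ?ys" using gp True ab
            by (auto simp: is_gpath_iff succ_drop succ_take dest: in_set_dropD in_set_takeD)
          moreover have "hd ?ys = u" using True ab by (simp add: hd_drop_conv_nth)
          moreover have "last ?ys = v" using True ab by (simp add: last_take_Suc)
          ultimately show ?thesis by blast
        next
          case False
          let ?ys = "rev (drop b (take (Suc a) xs))"
          have sy: "successively (\<lambda>u v. {u,v} \<in> E) (drop b (take (Suc a) xs))"
            using gp by (simp add: is_gpath_iff succ_drop succ_take)
          have "is_gpath (V,E) ?ys" using gp False ab sy
            by (auto simp: is_gpath_iff insert_commute dest: in_set_dropD in_set_takeD)
          moreover have "last ?ys = v" using False ab by (simp add: last_rev hd_drop_conv_nth)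
          moreover have "hd ?ys = u" using False ab by (simp add: hd_rev last_take_Suc)
          ultimately show ?thesis by blast
        qed
      qed
      then show ?thesis using Vx l unfolding connected_graph_def by auto
    qed
    from rc_witness[OF base_col[OF this]] show ?thesis using that by auto
  qed
  have a0: "\<alpha> 0 \<in> A1" "\<alpha> (?n - 3) \<in> A1" using \<alpha>A l by auto
  have "\<exists>ys. is_gpath (A1,E2) ys \<and> hd ys = \<alpha> 0 \<and> last ys = \<alpha> (?n - 3) \<and> rainbow_path c ys"
    using c(2) a0 unfolding rainbow_connected_def by simp
  then obtain ys where ys: "is_gpath (A1,E2) ys" "hd ys = \<alpha> 0" "last ys = \<alpha> (?n - 3)" "rainbow_path c ys"
    by blast
  have yne: "ys \<noteq> []" and ysA: "set ys \<subseteq> A1" and dys: "distinct ys"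
    and sys: "successively (\<lambda>u v. {u,v} \<in> E2) ys" using ys(1) by (auto simp: is_gpath_iff)
  have ind: "\<exists>i \<le> k. Suc i < ?n - 1 \<and> ys!k = \<alpha> i" if "k < length ys" for k
    using that
  proof (induction k)
    case 0 then show ?case using ys(2) yne l by (auto simp: hd_conv_nth)
  next
    case (Suc k)
    then obtain i where i: "i \<le> k" "Suc i < ?n - 1" "ys!k = \<alpha> i" by auto
    have "ys!Suc k \<in> A1" using ysA Suc.prems by auto
    then obtain j where j: "Suc j < ?n - 1" "ys!Suc k = \<alpha> j" using A1s by blast
    have "{ys!k, ys!Suc k} \<in> E2" using successively_nth[OF sys Suc.prems] .
    then have "\<alpha> i \<inter> \<alpha> j \<noteq> {}" using E2int i j by simp
    then have "j \<le> Suc i" using step i j by blast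
    then show ?case using i j by (intro exI[of _ j]) auto
  qed
  from ind[of "length ys - 1"] yne obtain i where i: "i \<le> length ys - 1" "Suc i < ?n - 1" "ys!(length ys - 1) = \<alpha> i"
    by auto
  have "\<alpha> i = \<alpha> (?n - 3)" using i ys(3) yne by (simp add: last_conv_nth)
  then have "i = ?n - 3" using \<alpha>inj i l by auto
  then have L: "?n - 3 \<le> length (path_edges ys)" using i by simp
  have "set (map c (path_edges ys)) \<subseteq> {0..<rc (A1,E2)}"
  proof
    fix x assume "x \<in> set (map c (path_edges ys))"
    then obtain k where k: "k < length ys - 1" "x = c (path_edges ys ! k)" by (auto simp: in_set_conv_nth)
    have "path_edges ys ! k \<in> E2" using successively_nth[OF sys, of k] k by (simp add: nth_path_edges)
    then show "x \<in> {0..<rc (A1,E2)}" using c(1) k by auto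
  qed
  then have "card (set (map c (path_edges ys))) \<le> rc (A1,E2)"
    using card_mono[of "{0..<rc (A1,E2)}"] by fastforce
  moreover have "card (set (map c (path_edges ys))) = length (path_edges ys)"
    using distinct_card ys(4) by (fastforce simp: rainbow_path_def)
  ultimately show "?n - 3 \<le> rc (A1,E2)" using L by simp
qed

end

lemma three_elems:
  assumes "3 \<le> card S"
  shows "\<exists>a b c. a \<in> S \<and> b \<in> S \<and> c \<in> S \<and> a \<noteq> b \<and> a \<noteq> c \<and> b \<noteq> c"
proof -
  have fin: "finite S" using assms card.infinite by fastforce
  obtain a where a: "a \<in> S" using assms by fastforce
  have "2 \<le> card (S - {a})" using assms a fin by simp
  then have "S - {a} \<noteq> {}" by (metis card.empty not_numeral_le_zero)
  then obtain b where b: "b \<in> S - {a}" by blast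
  have "1 \<le> card (S - {a} - {b})" using \<open>2 \<le> card (S - {a})\<close> b fin by simp
  then have "S - {a} - {b} \<noteq> {}" by (metis card.empty not_one_le_zero)
  then obtain c where c: "c \<in> S - {a} - {b}" by blast
  show ?thesis using a b c by blast
qed

context sg
begin

lemma pendent_sub: "P \<in> pendent_2paths (V,E) \<Longrightarrow> P \<subseteq> E \<and> card P = 2"
proof -
  assume "P \<in> pendent_2paths (V,E)"
  then obtain xs where xs: "P = set (path_edges xs)" "is_gpath (V,E) xs" "length xs = 3"
    unfolding pendent_2paths_def by blast
  have "\<exists>x y z. xs = [x,y,z]" using xs(3) by (simp add: numeral_3_eq_3 length_Suc_conv) blast
  then obtain x y z where xyz: "xs = [x,y,z]" by blast
  have d: "x \<noteq> z" and e: "{x,y} \<in> E" "{y,z} \<in> E" using xs(2) xyz by (auto simp: is_gpath_iff)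
  have P: "P = {{x,y},{y,z}}" using xs(1) xyz by simp
  have "{x,y} \<noteq> {y,z}" using d by (auto simp: doubleton_eq_iff)
  then show ?thesis using P e by simp
qed

lemma small_case:
  assumes En: "E \<noteq> {}" and m: "card E \<le> 2"
  shows "card N = 0" "card (pendent_2paths (V,E)) < card E"
proof -
  show "card N = 0"
  proof (rule ccontr)
    assume "card N \<noteq> 0"
    then obtain f where "f \<in> N" by (metis all_not_in_conv card.empty)
    then obtain a b where ab: "f \<in> E" "a \<noteq> b" "adj a f" "adj b f" unfolding N_def by blast
    then have "{a,b,f} \<subseteq> E" "card {a,b,f} = 3" by (auto simp: adj_def)
    then have "3 \<le> card E" using card_mono[OF finE] by metis
    then show False using m by simp
  qed
  have cE: "0 < card E" using En finE by (simp add: card_gt_0_iff)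
  show "card (pendent_2paths (V,E)) < card E"
  proof (cases "card E = 1")
    case True
    have "pendent_2paths (V,E) = {}"
    proof (rule ccontr)
      assume "pendent_2paths (V,E) \<noteq> {}"
      then obtain P where "P \<in> pendent_2paths (V,E)" by blast
      from pendent_sub[OF this] have "2 \<le> card E" using card_mono[OF finE] by metis
      then show False using True by simp
    qed
    then show ?thesis using cE by simp
  next
    case False
    then have c2: "card E = 2" using m cE by simp
    have "pendent_2paths (V,E) \<subseteq> {E}"
    proof
      fix P assume "P \<in> pendent_2paths (V,E)"
      from pendent_sub[OF this] have "P = E" using card_subset_eq[OF finE] c2 by metis
      then show "P \<in> {E}" by simp
    qed
    then have "card (pendent_2paths (V,E)) \<le> card {E}" by (intro card_mono) simp_all
    then have "card (pendent_2paths (V,E)) \<le> 1" by simp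
    then show ?thesis using c2 by simp
  qed
qed

lemma strict:
  assumes conn: "connected_graph (V,E)" and En: "E \<noteq> {}" and np: "\<not> is_path_graph_len_ge3 (V,E)"
  shows "rc (A1,E2) < card E - card (pendent_2paths (V,E))"
proof -
  have rcK: "rc (A1,E2) \<le> card N" using base_bound[OF conn] .
  have m1K: "card (pendent_2paths (V,E)) \<le> card E - card N" by (rule pendent_le)
  have KE: "card N \<le> card E" using card_mono[OF finE N_sub] .
  show ?thesis
  proof (cases "\<forall>v\<in>V. degree (V,E) v \<le> 2")
    case False
    then obtain v where v: "v \<in> V" "3 \<le> card {e\<in>E. v \<in> e}" by (auto simp: degree_def)
    from three_elems[OF v(2)] obtain e1 e2 e3 where e: "e1 \<in> E" "e2 \<in> E" "e3 \<in> E" "v \<in> e1" "v \<in> e2" "v \<in> e3"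
      "e1 \<noteq> e2" "e1 \<noteq> e3" "e2 \<noteq> e3" by blast
    have "adj e1 e2" "adj e1 e3" "adj e2 e3" using e by (auto simp: adj_def)
    from tri_bound[OF conn this] have "rc (A1,E2) < card N" .
    then show ?thesis using m1K KE by linarith
  next
    case deg: True
    show ?thesis
    proof (cases "card (pendent_2paths (V,E)) < card E - card N")
      case True then show ?thesis using rcK by linarith
    next
      case False
      from max2_structure[OF conn En deg] obtain xs where xs: "is_gpath (V,E) xs" "set xs = V" "2 \<le> length xs"
        "E = set (path_edges xs) \<or> (3 \<le> length xs \<and> {xs!(length xs - 1), xs!0} \<notin> set (path_edges xs) \<and>
       E = insert {xs!(length xs - 1), xs!0} (set (path_edges xs)))" by blast
      from xs(4) show ?thesis
      proof
        assume Ep: "E = set (path_edges xs)"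
        show ?thesis
        proof (cases "4 \<le> length xs")
          case True
          then have "is_path_graph_len_ge3 (V,E)" using xs Ep unfolding is_path_graph_len_ge3_def by auto
          then show ?thesis using np by simp
        next
          case False
          have "card E \<le> length (path_edges xs)" using Ep card_length by metis
          then have "card E \<le> 2" using False by simp
          from small_case[OF En this] show ?thesis using False \<open>\<not> _ < _\<close> by simp
        qed
      next
        assume c: "3 \<le> length xs \<and> {xs!(length xs - 1), xs!0} \<notin> set (path_edges xs) \<and>
          E = insert {xs!(length xs - 1), xs!0} (set (path_edges xs))"
        have "rc (A1,E2) < card N" using cycle_bound[OF xs(1)] c by blast
        then show ?thesis using m1K KE by linarith
      qed
    qed
  qed
qed

end

theorem theorem4p2:
  fixes G :: "'a graph"
  assumes "simple_graph G" and "connected_graph G" and "snd G \<noteq> {}"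
  shows "int (rc (line_graph (line_graph G))) \<le> int (card (snd G)) - int (card (pendent_2paths G))
     \<and> (int (rc (line_graph (line_graph G))) = int (card (snd G)) - int (card (pendent_2paths G))
          \<longleftrightarrow> is_path_graph_len_ge3 G)"
proof -
  obtain V E where G: "G = (V,E)" by (cases G)
  interpret sg V E using assms(1) G by unfold_locales simp
  have conn: "connected_graph (V,E)" and En: "E \<noteq> {}" using assms G by auto
  have LLG: "line_graph (line_graph G) = (A1,E2)" using LL G by simp
  have rcK: "rc (A1,E2) \<le> card N" using base_bound[OF conn] .
  have m1K: "card (pendent_2paths (V,E)) \<le> card E - card N" by (rule pendent_le)
  have KE: "card N \<le> card E" using card_mono[OF finE N_sub] .
  have le: "rc (A1,E2) \<le> card E - card (pendent_2paths (V,E))" using rcK m1K KE by linarith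
  have m1m: "card (pendent_2paths (V,E)) \<le> card E" using m1K by linarith
  have eq: "rc (A1,E2) = card E - card (pendent_2paths (V,E)) \<longleftrightarrow> is_path_graph_len_ge3 (V,E)"
  proof
    assume "rc (A1,E2) = card E - card (pendent_2paths (V,E))"
    then show "is_path_graph_len_ge3 (V,E)" using strict[OF conn En] by fastforce
  next
    assume "is_path_graph_len_ge3 (V,E)"
    then obtain xs where xs: "is_gpath (V,E) xs" "set xs = V" "set (path_edges xs) = E" "4 \<le> length xs"
      unfolding is_path_graph_len_ge3_def by auto
    from path_facts[OF xs] have "card E = length xs - 1" "2 \<le> card (pendent_2paths (V,E))"
      "length xs - 3 \<le> rc (A1,E2)" by auto
    then show "rc (A1,E2) = card E - card (pendent_2paths (V,E))" using le by linarith
  qed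
  have id: "int (card E - card (pendent_2paths (V,E))) = int (card E) - int (card (pendent_2paths (V,E)))"
    using m1m by (simp add: of_nat_diff)
  have "int (rc (A1,E2)) \<le> int (card E) - int (card (pendent_2paths (V,E)))" using le id by linarith
  moreover have "int (rc (A1,E2)) = int (card E) - int (card (pendent_2paths (V,E))) \<longleftrightarrow> is_path_graph_len_ge3 (V,E)"
    using eq id by linarith
  ultimately show ?thesis unfolding G LL by simp
qed

end
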